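(* For every $H\in\mathcal C$, the predominated graph $(H,V(H)\setminus X(H))$ is an atomic MBD critical graph.
   Context: For a tree $T$, $S(T)$ is obtained by subdividing each edge of $T$ exactly once; $\mathcal S=\{S(T):T\text{ a tree}\}$ and $X(S(T))=V(T)$ (with $S(P_1)=P_1$, $X(P_1)=V(P_1)$). The double-odd replacement of an edge $xy$ of a graph removes $xy$ and adds two internally vertex-disjoint $x,y$-paths, both of odd length (if both have length $1$ this is the same as keeping the single edge $xy$). For $F\in\mathcal S$, an $F$-cactus is a cactus graph $H$ that is either $F$ or obtained from $F$ by double-odd replacements of some edges of $F$; $H$ is bipartite and $X(H)$ is the bipartition class of $H$ containing $X(F)$. $\mathcal C$ is the set of all $F$-cacti over all $F\in\mathcal S$. A predominated graph is a pair $(G,D)$ with $D\subseteq V(G)$; in the MBD game on $(G,D)$, Staller and Dominator alternately claim unclaimed vertices of $V(G)$ (including vertices of $D$), Staller first, until all are claimed; Staller wins if she claims all of $N_G[v]$ for some $v\in V(G)\setminus D$, Dominator wins otherwise. $(G,D)$ is MBD critical if Staller wins on $(G,D)$ but Dominator wins on $(G,D\cup\{v\})$ for every $v\in V(G)\setminus D$; it is atomic MBD critical if moreover $D$ is independent in $G$ and no vertex of $D$ is isolated in $G$. *)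

theory Defs
  imports Main
begin

definition wf_graph :: "'a set \<Rightarrow> 'a set set \<Rightarrow> bool" where
  "wf_graph V E \<longleftrightarrow> finite V \<and> (\<forall>e\<in>E. \<exists>a b. e = {a, b} \<and> a \<noteq> b \<and> a \<in> V \<and> b \<in> V)"

definition adj :: "'a set set \<Rightarrow> 'a \<Rightarrow> 'a \<Rightarrow> bool" where
  "adj E a b \<longleftrightarrow> {a, b} \<in> E"

definition connected_graph :: "'a set \<Rightarrow> 'a set set \<Rightarrow> bool" where
  "connected_graph V E \<longleftrightarrow> (\<forall>u\<in>V. \<forall>v\<in>V. (adj E)\<^sup>*\<^sup>* u v)"

definition path_edges :: "'a list \<Rightarrow> 'a set set" where
  "path_edges ps = set (map (\<lambda>(a, b). {a, b}) (zip ps (tl ps)))"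

definition is_cycle :: "'a set \<Rightarrow> 'a set set \<Rightarrow> 'a list \<Rightarrow> bool" where
  "is_cycle V E cs \<longleftrightarrow> distinct cs \<and> length cs \<ge> 3 \<and> set cs \<subseteq> V
     \<and> path_edges (cs @ [hd cs]) \<subseteq> E"

definition cycle_edges :: "'a list \<Rightarrow> 'a set set" where
  "cycle_edges cs = path_edges (cs @ [hd cs])"

definition is_tree :: "'a set \<Rightarrow> 'a set set \<Rightarrow> bool" where
  "is_tree V E \<longleftrightarrow> wf_graph V E \<and> V \<noteq> {} \<and> connected_graph V E \<and> (\<nexists>cs. is_cycle V E cs)"

definition is_cactus :: "'a set \<Rightarrow> 'a set set \<Rightarrow> bool" where
  "is_cactus V E \<longleftrightarrow> wf_graph V E \<and> connected_graph V E \<and>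
     (\<forall>c1 c2. is_cycle V E c1 \<and> is_cycle V E c2 \<and> cycle_edges c1 \<inter> cycle_edges c2 \<noteq> {}
        \<longrightarrow> cycle_edges c1 = cycle_edges c2)"

text \<open>(VF, EF) is the subdivision S(T) of the tree T = (VT, ET): each edge e of T
  gets a new subdivision vertex m e.\<close>
definition is_subdivision :: "'a set \<Rightarrow> 'a set set \<Rightarrow> 'a set \<Rightarrow> 'a set set \<Rightarrow> bool" where
  "is_subdivision VT ET VF EF \<longleftrightarrow> VT \<subseteq> VF \<and>
     (\<exists>m. bij_betw m ET (VF - VT) \<and> EF = {{x, m e} | x e. e \<in> ET \<and> x \<in> e})"

text \<open>(VF, EF) belongs to the class S, with X(F) = XF.\<close>
definition in_S :: "'a set \<Rightarrow> 'a set set \<Rightarrow> 'a set \<Rightarrow> bool" where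
  "in_S VF EF XF \<longleftrightarrow> (\<exists>ET. is_tree XF ET \<and> is_subdivision XF ET VF EF)"

text \<open>An x,y-path (vertex list) of odd length (odd number of edges).\<close>
definition odd_path :: "'a list \<Rightarrow> 'a \<Rightarrow> 'a \<Rightarrow> bool" where
  "odd_path p x y \<longleftrightarrow> distinct p \<and> length p \<ge> 2 \<and> even (length p) \<and> hd p = x \<and> last p = y"

text \<open>dor VF EF V E R: (V,E) is obtained from (VF,EF) by double-odd replacements
  of the (distinct) edges in R \<subseteq> EF, performed one after another; the internal
  vertices of the new paths are fresh.\<close>
inductive dor :: "'a set \<Rightarrow> 'a set set \<Rightarrow> 'a set \<Rightarrow> 'a set set \<Rightarrow> 'a set set \<Rightarrow> bool"
  for VF EF where
  base: "dor VF EF VF EF {}"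
| step: "\<lbrakk> dor VF EF V E R; {x, y} \<in> EF; {x, y} \<notin> R; {x, y} \<in> E; x \<noteq> y;
           odd_path p x y; odd_path q x y; set p \<inter> set q = {x, y};
           (set p \<union> set q) \<inter> V = {x, y} \<rbrakk>
         \<Longrightarrow> dor VF EF (V \<union> set p \<union> set q)
               ((E - {{x, y}}) \<union> path_edges p \<union> path_edges q) (insert {x, y} R)"

definition is_F_cactus :: "'a set \<Rightarrow> 'a set set \<Rightarrow> 'a set \<Rightarrow> 'a set \<Rightarrow> 'a set set \<Rightarrow> bool" where
  "is_F_cactus VF EF XF V E \<longleftrightarrow> in_S VF EF XF \<and> is_cactus V E \<and> (\<exists>R. dor VF EF V E R)"

definition closed_nbhd :: "'a set \<Rightarrow> 'a set set \<Rightarrow> 'a \<Rightarrow> 'a set" where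
  "closed_nbhd V E v = insert v {u \<in> V. {u, v} \<in> E}"

text \<open>State: S = vertices claimed by
  Staller, U = unclaimed vertices, st = True iff it is Staller's turn.
  staller_wins holds iff Staller has a winning strategy from this state.\<close>
inductive staller_wins :: "'a set \<Rightarrow> 'a set set \<Rightarrow> 'a set \<Rightarrow> 'a set \<Rightarrow> 'a set \<Rightarrow> bool \<Rightarrow> bool"
  for V E D where
  fin: "\<lbrakk> U = {}; v \<in> V - D; closed_nbhd V E v \<subseteq> S \<rbrakk> \<Longrightarrow> staller_wins V E D S U st"
| stmove: "\<lbrakk> u \<in> U; staller_wins V E D (insert u S) (U - {u}) False \<rbrakk>
           \<Longrightarrow> staller_wins V E D S U True"
| dommove: "\<lbrakk> U \<noteq> {}; \<forall>u\<in>U. staller_wins V E D S (U - {u}) True \<rbrakk>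
           \<Longrightarrow> staller_wins V E D S U False"

definition staller_wins_MBD :: "'a set \<Rightarrow> 'a set set \<Rightarrow> 'a set \<Rightarrow> bool" where
  "staller_wins_MBD V E D \<longleftrightarrow> staller_wins V E D {} V True"

definition dominator_wins_MBD :: "'a set \<Rightarrow> 'a set set \<Rightarrow> 'a set \<Rightarrow> bool" where
  "dominator_wins_MBD V E D \<longleftrightarrow> \<not> staller_wins_MBD V E D"

definition MBD_critical :: "'a set \<Rightarrow> 'a set set \<Rightarrow> 'a set \<Rightarrow> bool" where
  "MBD_critical V E D \<longleftrightarrow> D \<subseteq> V \<and> staller_wins_MBD V E D \<and>
     (\<forall>v\<in>V - D. dominator_wins_MBD V E (D \<union> {v}))"

definition atomic_MBD_critical :: "'a set \<Rightarrow> 'a set set \<Rightarrow> 'a set \<Rightarrow> bool" where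
  "atomic_MBD_critical V E D \<longleftrightarrow> MBD_critical V E D \<and>
     (\<forall>a\<in>D. \<forall>b\<in>D. {a, b} \<notin> E) \<and> (\<forall>a\<in>D. \<exists>b\<in>V. {a, b} \<in> E)"

end

theory Submission
  imports Defs
begin

lemma won:
  assumes "finite U" "v \<in> V - D" "closed_nbhd V E v \<subseteq> S"
  shows "staller_wins V E D S U st"
  using assms
proof (induction U arbitrary: S st rule: finite_psubset_induct)
  case (psubset U S st)
  show ?case
  proof (cases "U = {}")
    case True
    then show ?thesis using psubset.prems by (auto intro: staller_wins.fin)
  next
    case False
    then obtain u where u: "u \<in> U" by blast
    have r: "staller_wins V E D S' (U - {u}) st'" if "S \<subseteq> S'" for S' st'
      using u psubset.prems that by (intro psubset.IH) auto
    show ?thesis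
    proof (cases st)
      case True
      have "staller_wins V E D S U True"
        by (rule staller_wins.stmove[OF u r]) auto
      then show ?thesis using True by simp
    next
      case False
      have "\<forall>w\<in>U. staller_wins V E D S (U - {w}) True"
      proof
        fix w assume "w \<in> U"
        then show "staller_wins V E D S (U - {w}) True"
          using psubset.prems by (intro psubset.IH) auto
      qed
      then show ?thesis using False \<open>U \<noteq> {}\<close> by (auto intro: staller_wins.dommove)
    qed
  qed
qed

lemma finish:
  assumes "finite U" "x \<in> U" "x \<in> V - D" "closed_nbhd V E x \<subseteq> insert x S"
  shows "staller_wins V E D S U True"
proof -
  have "staller_wins V E D (insert x S) (U - {x}) False"
    using assms by (intro won[of _ x]) auto
  then show ?thesis by (rule staller_wins.stmove[OF assms(2)])
qed

lemma force:
  assumes "finite U" "u \<in> U" "x \<in> U" "u \<noteq> x" "x \<in> V - D"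
    "closed_nbhd V E x \<subseteq> insert u (insert x S)"
    "staller_wins V E D (insert u S) (U - {u} - {x}) True"
  shows "staller_wins V E D S U True"
proof -
  have "staller_wins V E D (insert u S) (U - {u}) False"
  proof (rule staller_wins.dommove)
    show "U - {u} \<noteq> {}" using assms by auto
    show "\<forall>w\<in>U - {u}. staller_wins V E D (insert u S) (U - {u} - {w}) True"
    proof
      fix w assume w: "w \<in> U - {u}"
      show "staller_wins V E D (insert u S) (U - {u} - {w}) True"
      proof (cases "w = x")
        case True then show ?thesis using assms(7) by simp
      next
        case False
        show ?thesis using assms False w
          by (intro finish[of _ x]) auto
      qed
    qed
  qed
  then show ?thesis by (rule staller_wins.stmove[OF assms(2)])
qed

lemma sim_aux:
  assumes "staller_wins V' E' D' S' U' st"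
    and "\<forall>x\<in>V' - D'. x \<in> V - D \<and> closed_nbhd V E x \<subseteq> S0 \<union> closed_nbhd V' E' x"
    and "U' \<subseteq> U0" "S' \<subseteq> S0" "finite U0"
  shows "staller_wins V E D S0 U0 st"
  using assms
proof (induction arbitrary: S0 U0 rule: staller_wins.induct)
  case (fin U' v S' st)
  have "closed_nbhd V E v \<subseteq> S0" using fin by blast
  then show ?case using fin by (intro won[of _ v]) auto
next
  case (stmove u U' S')
  have "staller_wins V E D (insert u S0) (U0 - {u}) False"
    using stmove.prems stmove.IH[of "insert u S0" "U0 - {u}"] by blast
  then show ?case using stmove by (auto intro: staller_wins.stmove)
next
  case (dommove U' S')
  obtain u0 where u0: "u0 \<in> U'" using dommove.hyps by blast
  have IH: "staller_wins V E D S1 U1 True"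
    if "u \<in> U'" "U' - {u} \<subseteq> U1" "S' \<subseteq> S1" "finite U1"
       "\<forall>x\<in>V' - D'. x \<in> V - D \<and> closed_nbhd V E x \<subseteq> S1 \<union> closed_nbhd V' E' x"
    for u S1 U1
  proof -
    from dommove.IH that(1) have
      "\<And>S0 U0. \<forall>x\<in>V' - D'. x \<in> V - D \<and> closed_nbhd V E x \<subseteq> S0 \<union> closed_nbhd V' E' x \<Longrightarrow>
       U' - {u} \<subseteq> U0 \<Longrightarrow> S' \<subseteq> S0 \<Longrightarrow> finite U0 \<Longrightarrow> staller_wins V E D S0 U0 True"
      by blast
    from this[OF that(5,2,3,4)] show ?thesis .
  qed
  have "\<forall>w\<in>U0. staller_wins V E D S0 (U0 - {w}) True"
  proof
    fix w assume w: "w \<in> U0"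
    show "staller_wins V E D S0 (U0 - {w}) True"
    proof (cases "w \<in> U'")
      case True
      show ?thesis by (rule IH[of w]) (use True dommove.prems in auto)
    next
      case False
      show ?thesis by (rule IH[of u0]) (use False u0 dommove.prems in auto)
    qed
  qed
  moreover have "U0 \<noteq> {}" using dommove.prems u0 by blast
  ultimately show ?case by (rule staller_wins.dommove[rotated])
qed

lemma sim:
  assumes "staller_wins V' E' D' S' U' st"
    and "U' \<subseteq> U" "S' \<subseteq> S" "finite U"
    and "\<forall>x\<in>V' - D'. x \<in> V - D \<and> closed_nbhd V E x \<subseteq> S \<union> closed_nbhd V' E' x"
  shows "staller_wins V E D S U st"
  using sim_aux[OF assms(1,5,2,3,4)] .

definition pinv :: "'a set set \<Rightarrow> bool \<Rightarrow> 'a set \<Rightarrow> 'a set \<Rightarrow> bool" where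
  "pinv P st S U = (if st then (\<forall>p\<in>P. p \<subseteq> U \<or> \<not> p \<subseteq> S \<union> U)
     else (\<exists>w. \<forall>p\<in>P. p \<subseteq> U \<or> \<not> p \<subseteq> S \<union> U \<or> (w \<in> p \<and> w \<in> U)))"

lemma pairing_aux:
  assumes "staller_wins V E D S U st"
    and "\<forall>p\<in>P. card p = 2"
    and "\<forall>p\<in>P. \<forall>q\<in>P. p \<noteq> q \<longrightarrow> p \<inter> q = {}"
    and "\<forall>v\<in>V - D. \<exists>p\<in>P. p \<subseteq> closed_nbhd V E v"
    and "S \<inter> U = {}" "pinv P st S U"
  shows False
  using assms
proof (induction rule: staller_wins.induct)
  case (fin U v S st)
  obtain p where p: "p \<in> P" "p \<subseteq> S"
    using fin.hyps(2,3) fin.prems(3) by blast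
  have "card p = 2" using fin.prems(1) p(1) by blast
  then have pne: "p \<noteq> {}" by auto
  show False
  proof (cases st)
    case True
    then have "\<forall>p\<in>P. p \<subseteq> U \<or> \<not> p \<subseteq> S \<union> U" using fin.prems(5) by (simp add: pinv_def)
    then show False using p pne fin.hyps(1) by blast
  next
    case False
    then obtain w where "\<forall>p\<in>P. p \<subseteq> U \<or> \<not> p \<subseteq> S \<union> U \<or> (w \<in> p \<and> w \<in> U)"
      using fin.prems(5) by (auto simp add: pinv_def)
    then show False using p pne fin.hyps(1) by blast
  qed
next
  case (stmove u U S)
  have inv: "\<forall>p\<in>P. p \<subseteq> U \<or> \<not> p \<subseteq> S \<union> U" using stmove.prems(5) by (simp add: pinv_def)
  have SU: "S \<union> U = insert u S \<union> (U - {u})" using stmove.hyps(1) by blast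
  have "pinv P False (insert u S) (U - {u})"
  proof (cases "\<exists>p0\<in>P. u \<in> p0 \<and> p0 \<subseteq> U")
    case True
    then obtain p0 where p0: "p0 \<in> P" "u \<in> p0" "p0 \<subseteq> U" by blast
    have "card p0 = 2" using p0(1) stmove.prems(1) by blast
    then obtain a b where ab: "p0 = {a,b}" "a \<noteq> b" by (meson card_2_iff)
    obtain w where w: "p0 = {u, w}" "w \<noteq> u" using ab p0(2) by blast
    have "\<forall>p\<in>P. p \<subseteq> U - {u} \<or> \<not> p \<subseteq> insert u S \<union> (U - {u}) \<or> (w \<in> p \<and> w \<in> U - {u})"
    proof
      fix p assume p: "p \<in> P"
      show "p \<subseteq> U - {u} \<or> \<not> p \<subseteq> insert u S \<union> (U - {u}) \<or> (w \<in> p \<and> w \<in> U - {u})"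
      proof (cases "u \<in> p \<and> p \<subseteq> U")
        case True
        have "p \<inter> p0 \<noteq> {}" using True p0(2) by blast
        then have "p = p0" using p p0(1) stmove.prems(2) by blast
        then have "w \<in> p \<and> w \<in> U - {u}" using w p0(3) by blast
        then show ?thesis by blast
      next
        case False
        have "p \<subseteq> U \<or> \<not> p \<subseteq> S \<union> U" using inv p by blast
        then show ?thesis using False SU by blast
      qed
    qed
    then show ?thesis unfolding pinv_def by (simp only: if_False) blast
  next
    case False
    have "\<forall>p\<in>P. p \<subseteq> U - {u} \<or> \<not> p \<subseteq> insert u S \<union> (U - {u})"
    proof
      fix p assume p: "p \<in> P"
      have "p \<subseteq> U \<or> \<not> p \<subseteq> S \<union> U" using inv p by blast
      then show "p \<subseteq> U - {u} \<or> \<not> p \<subseteq> insert u S \<union> (U - {u})"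
        using False p SU by blast
    qed
    then show ?thesis unfolding pinv_def by (simp only: if_False) blast
  qed
  moreover have "insert u S \<inter> (U - {u}) = {}" using stmove.prems(4) by blast
  ultimately show ?case using stmove.IH stmove.prems(1,2,3) by blast
next
  case (dommove U S)
  obtain w where w: "\<forall>p\<in>P. p \<subseteq> U \<or> \<not> p \<subseteq> S \<union> U \<or> (w \<in> p \<and> w \<in> U)"
    using dommove.prems(5) by (auto simp: pinv_def)
  obtain u where u: "u \<in> U" "w \<in> U \<longrightarrow> u = w" using dommove.hyps(1) by blast
  have "pinv P True S (U - {u})"
  proof -
    have "\<forall>p\<in>P. p \<subseteq> U - {u} \<or> \<not> p \<subseteq> S \<union> (U - {u})"
    proof
      fix p assume p: "p \<in> P"
      have "u \<notin> S" using u(1) dommove.prems(4) by blast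
      have "p \<subseteq> U \<or> \<not> p \<subseteq> S \<union> U \<or> (w \<in> p \<and> w \<in> U)" using w p by blast
      then show "p \<subseteq> U - {u} \<or> \<not> p \<subseteq> S \<union> (U - {u})"
        using u \<open>u \<notin> S\<close> by blast
    qed
    then show ?thesis by (simp add: pinv_def)
  qed
  moreover have "S \<inter> (U - {u}) = {}" using dommove.prems(4) by blast
  ultimately show ?case using dommove.IH u(1) dommove.prems(1,2,3) by blast
qed

lemma pairing_dom:
  assumes "\<forall>p\<in>P. card p = 2"
    and "\<forall>p\<in>P. \<forall>q\<in>P. p \<noteq> q \<longrightarrow> p \<inter> q = {}"
    and "\<forall>v\<in>V - D. \<exists>p\<in>P. p \<subseteq> closed_nbhd V E v"
  shows "dominator_wins_MBD V E D"
proof -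
  have "pinv P True {} V" by (simp add: pinv_def)
  then have "\<not> staller_wins V E D {} V True"
    using pairing_aux[OF _ assms, of "{}" V True] by blast
  then show ?thesis unfolding dominator_wins_MBD_def staller_wins_MBD_def .
qed

lemma pe_Nil[simp]: "path_edges [] = {}" by (simp add: path_edges_def)
lemma pe_single[simp]: "path_edges [a] = {}" by (simp add: path_edges_def)
lemma pe_Cons2[simp]: "path_edges (a # b # r) = insert {a,b} (path_edges (b # r))"
  by (simp add: path_edges_def)

lemma pe_iff: "q \<in> path_edges xs \<longleftrightarrow> (\<exists>i. Suc i < length xs \<and> q = {xs!i, xs!Suc i})"
proof (induction xs rule: induct_list012)
  case (3 a b r)
  show ?case
  proof
    assume "q \<in> path_edges (a # b # r)"
    then have "q = {a,b} \<or> q \<in> path_edges (b # r)" by simp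
    then show "\<exists>i. Suc i < length (a # b # r) \<and> q = {(a # b # r) ! i, (a # b # r) ! Suc i}"
    proof
      assume "q = {a,b}" then show ?thesis by (intro exI[of _ 0]) auto
    next
      assume "q \<in> path_edges (b # r)"
      then obtain i where "Suc i < length (b # r)" "q = {(b#r)!i, (b#r)! Suc i}" using 3 by blast
      then show ?thesis by (intro exI[of _ "Suc i"]) auto
    qed
  next
    assume "\<exists>i. Suc i < length (a # b # r) \<and> q = {(a # b # r) ! i, (a # b # r) ! Suc i}"
    then obtain i where i: "Suc i < length (a # b # r)" "q = {(a # b # r) ! i, (a # b # r) ! Suc i}" by blast
    show "q \<in> path_edges (a # b # r)"
    proof (cases i)
      case 0 then show ?thesis using i by simp
    next
      case (Suc k)
      then have "q \<in> path_edges (b # r)" using 3 i by auto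
      then show ?thesis by simp
    qed
  qed
qed auto

lemma pe_Cons_sub: "path_edges xs \<subseteq> path_edges (a # xs)"
  by (cases xs) auto

lemma pe_append: "path_edges (xs @ ys) = path_edges xs \<union> path_edges ys \<union>
   (if xs \<noteq> [] \<and> ys \<noteq> [] then {{last xs, hd ys}} else {})"
proof (induction xs rule: induct_list012)
  case (2 a) then show ?case by (cases ys) auto
next
  case (3 a b r) then show ?case by auto
qed simp

lemma pe_rev: "path_edges (rev xs) = path_edges xs"
proof (induction xs rule: induct_list012)
  case (3 a b r)
  have "path_edges (rev (a # b # r)) = path_edges (rev (b # r) @ [a])" by simp
  also have "\<dots> = path_edges (rev (b # r)) \<union> {{b, a}}" by (simp add: pe_append)
  finally show ?case using 3 by (auto simp: insert_commute)
qed auto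

lemma pe_take: "path_edges (take n xs) \<subseteq> path_edges xs"
proof
  fix q assume "q \<in> path_edges (take n xs)"
  then obtain i where i: "Suc i < length (take n xs)" "q = {take n xs ! i, take n xs ! Suc i}"
    unfolding pe_iff by blast
  then show "q \<in> path_edges xs" unfolding pe_iff
    by (intro exI[of _ i]) auto
qed

lemma nth_notin_take: "distinct W \<Longrightarrow> k < length W \<Longrightarrow> n \<le> k \<Longrightarrow> W!k \<notin> set (take n W)"
proof
  assume a: "distinct W" "k < length W" "n \<le> k" "W!k \<in> set (take n W)"
  then obtain j where j: "j < length (take n W)" "take n W ! j = W ! k" by (auto simp: in_set_conv_nth)
  then have "W ! j = W ! k" "j < n" by auto
  then show False using a nth_eq_iff_index_eq[of W j k] by auto
qed

lemma pe_drop: "path_edges (drop n xs) \<subseteq> path_edges xs"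
proof
  fix q assume "q \<in> path_edges (drop n xs)"
  then obtain i where i: "Suc i < length (drop n xs)" "q = {drop n xs ! i, drop n xs ! Suc i}"
    unfolding pe_iff by blast
  then show "q \<in> path_edges xs" unfolding pe_iff
    by (intro exI[of _ "n + i"]) auto
qed

lemma pe_sub_set: "q \<in> path_edges xs \<Longrightarrow> q \<subseteq> set xs"
  unfolding pe_iff by auto

lemma pe_ext_nth:
  assumes "k < length W + 2"
  shows "(\<mu> # W @ [\<mu>]) ! k = (if k = 0 then \<mu> else if k \<le> length W then W ! (k - 1) else \<mu>)"
  using assms by (cases k) (auto simp: nth_append)

lemma pe_nbr:
  assumes "distinct W" "\<mu> \<notin> set W" "j < length W" "{W!j, b} \<in> path_edges (\<mu> # W @ [\<mu>])"
  shows "b = \<mu> \<or> (0 < j \<and> b = W!(j - 1)) \<or> (Suc j < length W \<and> b = W!(Suc j))"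
proof -
  let ?L = "\<mu> # W @ [\<mu>]"
  obtain i where i: "Suc i < length ?L" "{W!j, b} = {?L!i, ?L!Suc i}"
    using assms(4) unfolding pe_iff by blast
  have uniq: "k = Suc j" if "k < length ?L" "?L ! k = W ! j" for k
  proof -
    have k: "?L ! k = (if k = 0 then \<mu> else if k \<le> length W then W ! (k - 1) else \<mu>)"
      using that(1) pe_ext_nth[of k W \<mu>] by simp
    have Wj: "W!j \<noteq> \<mu>" using assms(2,3) nth_mem by metis
    have "k \<noteq> 0 \<and> k \<le> length W" using k that(2) Wj by (auto split: if_splits)
    then have "W ! (k - 1) = W ! j" using k that(2) by simp
    then have "k - 1 = j" using assms(1,3) \<open>k \<noteq> 0 \<and> k \<le> length W\<close> nth_eq_iff_index_eq by fastforce
    then show ?thesis using \<open>k \<noteq> 0 \<and> k \<le> length W\<close> by arith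
  qed
  have "W!j = ?L!i \<or> W!j = ?L!Suc i" using i(2) by blast
  then show ?thesis
  proof
    assume "W!j = ?L!i"
    then have "i = Suc j" using uniq[of i] i(1) by (metis Suc_lessD)
    then have "b = ?L ! Suc (Suc j)" using i(2) \<open>W!j = ?L!i\<close> by (auto simp: doubleton_eq_iff)
    then show ?thesis using pe_ext_nth[of "Suc (Suc j)" W \<mu>] assms(3) i(1) \<open>i = Suc j\<close>
      by (auto split: if_splits)
  next
    assume "W!j = ?L!Suc i"
    then have "Suc i = Suc j" using uniq[of "Suc i"] i(1) by metis
    then have "b = ?L ! j" using i(2) \<open>W!j = ?L!Suc i\<close> by (auto simp: doubleton_eq_iff)
    then show ?thesis using pe_ext_nth[of j W \<mu>] assms(3)
      by (cases j) (auto split: if_splits)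
  qed
qed

fun pairs2 :: "'a list \<Rightarrow> 'a set set" where
  "pairs2 (a # b # r) = insert {a,b} (pairs2 r)"
| "pairs2 _ = {}"

lemma pairs2_pe: "pairs2 xs \<subseteq> path_edges xs"
proof (induction xs rule: pairs2.induct)
  case (1 a b r)
  then show ?case using pe_Cons_sub[of r b] by auto
qed auto

lemma pairs2_Un: "even (length xs) \<Longrightarrow> \<Union> (pairs2 xs) = set xs"
  by (induction xs rule: pairs2.induct) auto

lemma pairs2_sub: "\<Union> (pairs2 xs) \<subseteq> set xs"
  by (induction xs rule: pairs2.induct) auto

lemma pairs2_disj: "distinct xs \<Longrightarrow> p \<in> pairs2 xs \<Longrightarrow> q \<in> pairs2 xs \<Longrightarrow> p \<noteq> q \<Longrightarrow> p \<inter> q = {}"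
proof (induction xs arbitrary: p q rule: pairs2.induct)
  case (1 a b r)
  have s: "\<Union> (pairs2 r) \<subseteq> set r" by (rule pairs2_sub)
  show ?case using 1 s by auto
qed auto

lemma chainL:
  assumes "finite U" "\<mu> \<in> S" "distinct W" "\<mu> \<notin> set W" "2*i < length W"
    "set (take (2*i) W) \<subseteq> U"
    "\<forall>j<i. W!(2*j) \<in> V - D \<and>
        closed_nbhd V E (W!(2*j)) \<subseteq> insert (W!(2*j)) {b. {W!(2*j), b} \<in> path_edges (\<mu> # W @ [\<mu>])}"
    "staller_wins V E D (S \<union> (\<lambda>j. W!(2*j+1)) ` {..<i}) (U - set (take (2*i) W)) True"
  shows "staller_wins V E D S U True"
  using assms
proof (induction i)
  case 0 then show ?case by simp
next
  case (Suc i)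
  let ?Y = "(\<lambda>j. W!(2*j+1)) ` {..<i}"
  let ?u = "W!(2*i+1)" and ?x = "W!(2*i)"
  have len: "2*i+1 < length W" using Suc.prems(5) by simp
  have tk: "take (2*Suc i) W = take (2*i) W @ [?x, ?u]"
    using len by (simp add: take_Suc_conv_app_nth numeral_2_eq_2)
  have ux: "?u \<noteq> ?x" using Suc.prems(3) len by (simp add: nth_eq_iff_index_eq)
  have uxU: "?u \<in> U - set (take (2*i) W)" "?x \<in> U - set (take (2*i) W)"
    using Suc.prems(3,6) len tk nth_notin_take[OF Suc.prems(3), of "2*i+1" "2*i"]
      nth_notin_take[OF Suc.prems(3), of "2*i" "2*i"] by auto
  have nb: "closed_nbhd V E ?x \<subseteq> insert ?u (insert ?x (S \<union> ?Y))"
  proof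
    fix b assume b: "b \<in> closed_nbhd V E ?x"
    have "b \<in> insert ?x {b. {?x, b} \<in> path_edges (\<mu> # W @ [\<mu>])}"
      using Suc.prems(7) b by blast
    then consider "b = ?x" | "{?x, b} \<in> path_edges (\<mu> # W @ [\<mu>])" by blast
    then show "b \<in> insert ?u (insert ?x (S \<union> ?Y))"
    proof cases
      case 2
      then have "b = \<mu> \<or> (0 < 2*i \<and> b = W!(2*i - 1)) \<or> (Suc (2*i) < length W \<and> b = W!(Suc (2*i)))"
        using pe_nbr[OF Suc.prems(3,4), of "2*i" b] len by simp
      moreover have "W!(2*i - 1) \<in> ?Y" if "0 < 2*i"
      proof -
        have e: "2*i - 1 = 2*(i - 1) + 1" using that by simp
        show ?thesis unfolding e by (rule image_eqI[of _ _ "i - 1"]) (use that in auto)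
      qed
      ultimately show ?thesis using Suc.prems(2) by auto
    qed simp
  qed
  have "staller_wins V E D (insert ?u (S \<union> ?Y)) (U - set (take (2*i) W) - {?u} - {?x}) True"
  proof -
    have "insert ?u (S \<union> ?Y) = S \<union> (\<lambda>j. W!(2*j+1)) ` {..<Suc i}" by (auto simp: lessThan_Suc)
    moreover have "U - set (take (2*i) W) - {?u} - {?x} = U - set (take (2*Suc i) W)"
      using tk by auto
    ultimately show ?thesis using Suc.prems(8) by simp
  qed
  then have "staller_wins V E D (S \<union> ?Y) (U - set (take (2*i) W)) True"
    using force[of "U - set (take (2*i) W)" ?u ?x V D E "S \<union> ?Y"] uxU ux nb Suc.prems(1,7) by auto
  then show ?case using Suc.IH Suc.prems(1-4,6,7) len tk by auto
qed

lemma xpath: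
  assumes "finite U" "\<mu> \<in> S" "distinct W" "\<mu> \<notin> set W" "length W = 2*k+1"
    "set W \<subseteq> U"
    "\<forall>j\<le>k. W!(2*j) \<in> V - D \<and>
        closed_nbhd V E (W!(2*j)) \<subseteq> insert (W!(2*j)) {b. {W!(2*j), b} \<in> path_edges (\<mu> # W @ [\<mu>])}"
  shows "staller_wins V E D S U True"
proof (rule chainL[of U \<mu> S W k])
  let ?Y = "(\<lambda>j. W!(2*j+1)) ` {..<k}"
  let ?x = "W!(2*k)"
  show "set (take (2*k) W) \<subseteq> U" using assms(6) set_take_subset by fast
  have xin: "?x \<in> U - set (take (2*k) W)"
    using assms(3,5,6) nth_notin_take[OF assms(3), of "2*k" "2*k"] nth_mem[of "2*k" W] by auto
  show "staller_wins V E D (S \<union> ?Y) (U - set (take (2*k) W)) True"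
  proof (rule finish[OF _ xin])
    show "finite (U - set (take (2*k) W))" using assms(1) by simp
    show "?x \<in> V - D" using assms(7) by simp
    show "closed_nbhd V E ?x \<subseteq> insert ?x (S \<union> ?Y)"
    proof
      fix b assume b: "b \<in> closed_nbhd V E ?x"
      have "b \<in> insert ?x {b. {?x, b} \<in> path_edges (\<mu> # W @ [\<mu>])}"
        using assms(7) b by blast
      then consider "b = ?x" | "{?x, b} \<in> path_edges (\<mu> # W @ [\<mu>])" by blast
      then show "b \<in> insert ?x (S \<union> ?Y)"
      proof cases
        case 2
        then have "b = \<mu> \<or> (0 < 2*k \<and> b = W!(2*k - 1)) \<or> (Suc (2*k) < length W \<and> b = W!(Suc (2*k)))"
          using pe_nbr[OF assms(3,4), of "2*k" b] assms(5) by simp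
        moreover have "W!(2*k - 1) \<in> ?Y" if "0 < 2*k"
        proof -
          have e: "2*k - 1 = 2*(k - 1) + 1" using that by simp
          show ?thesis unfolding e by (rule image_eqI[of _ _ "k - 1"]) (use that in auto)
        qed
        ultimately show ?thesis using assms(2,5) by auto
      qed simp
    qed
  qed
qed (use assms in auto)

lemma wf_edge: "wf_graph V E \<Longrightarrow> e \<in> E \<Longrightarrow> \<exists>a b. e = {a,b} \<and> a \<noteq> b \<and> a \<in> V \<and> b \<in> V"
  unfolding wf_graph_def by blast

lemma tree_single:
  assumes "is_tree XF ET" "card XF = 1" shows "ET = {}"
proof (rule ccontr)
  assume "ET \<noteq> {}"
  then obtain e where "e \<in> ET" by blast
  then obtain a b where "a \<noteq> b" "a \<in> XF" "b \<in> XF"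
    using assms(1) wf_edge unfolding is_tree_def by metis
  then have "card {a,b} \<le> card XF" using assms(1) unfolding is_tree_def wf_graph_def
    by (intro card_mono) auto
  then have "card XF \<ge> 2" using \<open>a \<noteq> b\<close> by simp
  then show False using assms(2) by simp
qed

lemma tree_leaf:
  assumes "is_tree XF ET" "\<not> card XF \<le> 1"
  shows "\<exists>l p. {l,p} \<in> ET \<and> l \<noteq> p \<and> (\<forall>e'\<in>ET. l \<in> e' \<longrightarrow> e' = {l,p})"
proof -
  have fin: "finite XF" and wf: "wf_graph XF ET" and con: "connected_graph XF ET"
    and nocyc: "\<nexists>cs. is_cycle XF ET cs"
    using assms(1) unfolding is_tree_def wf_graph_def by auto
  have "\<exists>u\<in>XF. \<exists>v\<in>XF. u \<noteq> v" using assms(2) fin by (auto simp: card_le_Suc0_iff_eq)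
  then obtain u v where uv: "u \<in> XF" "v \<in> XF" "u \<noteq> v" by blast
  have "(adj ET)\<^sup>*\<^sup>* u v" using con uv unfolding connected_graph_def by blast
  then obtain w where "adj ET u w" using uv(3) by (metis converse_rtranclpE)
  then have uw: "{u,w} \<in> ET" unfolding adj_def .
  define PS where "PS = {ps. distinct ps \<and> set ps \<subseteq> XF \<and> path_edges ps \<subseteq> ET}"
  have "PS \<subseteq> {xs. set xs \<subseteq> XF \<and> length xs \<le> card XF}"
    unfolding PS_def using fin by (auto intro: card_mono simp flip: distinct_card)
  then have finPS: "finite PS" using finite_lists_length_le[OF fin] finite_subset by blast
  obtain a b where ab: "{u,w} = {a,b}" "a \<noteq> b" "a \<in> XF" "b \<in> XF" using wf_edge[OF wf uw] by blast
  have "[a,b] \<in> PS" unfolding PS_def using ab uw by auto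
  define n where "n = Max (length ` PS)"
  have "n \<in> length ` PS" unfolding n_def using finPS \<open>[a,b] \<in> PS\<close> by (intro Max_in) auto
  then obtain ps where ps: "ps \<in> PS" "length ps = n" by blast
  have maxl: "length qs \<le> n" if "qs \<in> PS" for qs
    unfolding n_def using finPS that by (intro Max_ge) auto
  have "2 \<le> n" using maxl[OF \<open>[a,b] \<in> PS\<close>] by simp
  then obtain l v1 rest where psc: "ps = l # v1 # rest" using ps(2)
    by (metis Suc_le_length_iff numeral_2_eq_2)
  have psd: "distinct ps" "set ps \<subseteq> XF" "path_edges ps \<subseteq> ET" using ps(1) unfolding PS_def by auto
  have e0: "{l, v1} \<in> ET" using psd(3) psc by simp
  have lv: "l \<noteq> v1" using psd(1) psc by simp
  have "\<forall>e'\<in>ET. l \<in> e' \<longrightarrow> e' = {l,v1}"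
  proof (intro ballI impI)
    fix e' assume e': "e' \<in> ET" "l \<in> e'"
    obtain x y where xy: "e' = {x,y}" "x \<noteq> y" "x \<in> XF" "y \<in> XF" using wf_edge[OF wf e'(1)] by blast
    obtain z where z: "e' = {l, z}" "z \<noteq> l" "z \<in> XF" using xy e'(2) by blast
    show "e' = {l, v1}"
    proof (cases "z \<in> set ps")
      case False
      have "z # ps \<in> PS" unfolding PS_def using psd False z e' psc by (auto simp: insert_commute)
      then show ?thesis using maxl ps(2) by fastforce
    next
      case True
      then obtain k where k: "k < length ps" "ps ! k = z" by (auto simp: in_set_conv_nth)
      have "k \<noteq> 0" proof assume "k = 0" then show False using k z psc by simp qed
      show ?thesis
      proof (cases "k = 1")
        case True then show ?thesis using k z psc by simp
      next
        case False
        define cs where "cs = take (Suc k) ps"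
        have cs1: "distinct cs" "length cs \<ge> 3" "set cs \<subseteq> XF"
          unfolding cs_def using psd k \<open>k \<noteq> 0\<close> False
          by (auto dest: in_set_takeD)
        have "cs \<noteq> []" "hd cs = l" "last cs = z" unfolding cs_def using k psc
          by (auto simp: last_conv_nth)
        then have "path_edges (cs @ [hd cs]) = path_edges cs \<union> {{z, l}}"
          by (simp add: pe_append)
        also have "\<dots> \<subseteq> ET" using pe_take[of "Suc k" ps] psd(3) z e'
          unfolding cs_def by (auto simp: insert_commute)
        finally have "is_cycle XF ET cs" unfolding is_cycle_def using cs1 by simp
        then show ?thesis using nocyc by blast
      qed
    qed
  qed
  then show ?thesis using e0 lv by blast
qed

lemma tree_remove:
  assumes "is_tree XF ET" "{l,p} \<in> ET" "l \<noteq> p" "\<forall>e'\<in>ET. l \<in> e' \<longrightarrow> e' = {l,p}"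
  shows "is_tree (XF - {l}) (ET - {{l,p}})"
proof -
  let ?E = "ET - {{l,p}}"
  have fin: "finite XF" and wf: "wf_graph XF ET" and con: "connected_graph XF ET"
    and nocyc: "\<nexists>cs. is_cycle XF ET cs"
    using assms(1) unfolding is_tree_def wf_graph_def by auto
  have pX: "p \<in> XF" using wf_edge[OF wf assms(2)] by (auto simp: doubleton_eq_iff)
  have wf': "wf_graph (XF - {l}) ?E"
    unfolding wf_graph_def
  proof (intro conjI ballI)
    show "finite (XF - {l})" using fin by simp
    fix e assume e: "e \<in> ?E"
    then obtain a b where ab: "e = {a,b}" "a \<noteq> b" "a \<in> XF" "b \<in> XF" using wf_edge[OF wf] by blast
    have "l \<notin> e" using e assms(4) by blast
    then show "\<exists>a b. e = {a, b} \<and> a \<noteq> b \<and> a \<in> XF - {l} \<and> b \<in> XF - {l}" using ab by blast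
  qed
  have reach: "(adj ET)\<^sup>*\<^sup>* u w \<Longrightarrow> u \<noteq> l \<Longrightarrow>
      (w \<noteq> l \<longrightarrow> (adj ?E)\<^sup>*\<^sup>* u w) \<and> (w = l \<longrightarrow> (adj ?E)\<^sup>*\<^sup>* u p)" for u w
  proof (induction rule: rtranclp_induct)
    case base then show ?case by simp
  next
    case (step y z)
    have yz: "{y,z} \<in> ET" using step.hyps(2) unfolding adj_def .
    have IH: "(y \<noteq> l \<longrightarrow> (adj ?E)\<^sup>*\<^sup>* u y) \<and> (y = l \<longrightarrow> (adj ?E)\<^sup>*\<^sup>* u p)"
      using step.IH step.prems by blast
    show ?case
    proof (cases "y = l")
      case True
      have "{y,z} = {l,p}" by (rule assms(4)[rule_format, OF yz]) (simp add: True)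
      then have zp: "z = p" using assms(3) True by (simp add: doubleton_eq_iff)
      have "(adj ?E)\<^sup>*\<^sup>* u p" using IH True by blast
      then show ?thesis using zp assms(3) by blast
    next
      case False
      then have Ry: "(adj ?E)\<^sup>*\<^sup>* u y" using IH by blast
      show ?thesis
      proof (cases "z = l")
        case True
        have "{y,z} = {l,p}" by (rule assms(4)[rule_format, OF yz]) (simp add: True)
        then have "y = p" using False True by (simp add: doubleton_eq_iff)
        then show ?thesis using Ry True by blast
      next
        case zl: False
        have "{y,z} \<noteq> {l,p}" using zl False by (simp add: doubleton_eq_iff)
        then have "adj ?E y z" using yz unfolding adj_def by blast
        then have "(adj ?E)\<^sup>*\<^sup>* u z" by (rule rtranclp.rtrancl_into_rtrancl[OF Ry])
        then show ?thesis using zl by blast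
      qed
    qed
  qed
  have con': "connected_graph (XF - {l}) ?E"
    unfolding connected_graph_def
  proof (intro ballI)
    fix u v assume "u \<in> XF - {l}" "v \<in> XF - {l}"
    then show "(adj ?E)\<^sup>*\<^sup>* u v" using reach[of u v] con unfolding connected_graph_def by blast
  qed
  have nocyc': "\<nexists>cs. is_cycle (XF - {l}) ?E cs"
  proof
    assume "\<exists>cs. is_cycle (XF - {l}) ?E cs"
    then obtain cs where "is_cycle (XF - {l}) ?E cs" by blast
    then have "is_cycle XF ET cs" unfolding is_cycle_def by auto
    then show False using nocyc by blast
  qed
  have ne: "XF - {l} \<noteq> {}" using pX assms(3) by blast
  show ?thesis unfolding is_tree_def using wf' con' nocyc' ne by (simp only: simp_thms)
qed

definition gstruct :: "'a set \<Rightarrow> 'a set set \<Rightarrow> ('a set \<Rightarrow> 'a) \<Rightarrow> ('a \<Rightarrow> 'a set \<Rightarrow> 'a list) \<Rightarrow> 'a set \<Rightarrow> 'a set set \<Rightarrow> bool" where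
 "gstruct XF ET m W V E \<longleftrightarrow> is_tree XF ET \<and> inj_on m ET \<and> m ` ET \<inter> XF = {} \<and>
   (\<forall>e\<in>ET. \<forall>x\<in>e. distinct (W x e) \<and> odd (length (W x e)) \<and>
      (\<exists>i. 2*i < length (W x e) \<and> W x e ! (2*i) = x) \<and> set (W x e) \<inter> (XF \<union> m ` ET) = {x}) \<and>
   (\<forall>e\<in>ET. \<forall>x\<in>e. \<forall>e'\<in>ET. \<forall>x'\<in>e'. (x,e) \<noteq> (x',e') \<longrightarrow> (set (W x e) - {x}) \<inter> set (W x' e') = {}) \<and>
   V = XF \<union> m ` ET \<union> (\<Union>e\<in>ET. \<Union>x\<in>e. set (W x e)) \<and>
   E = (\<Union>e\<in>ET. \<Union>x\<in>e. path_edges (m e # W x e @ [m e]))"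

context
  fixes XF ET m W V E
  assumes gs: "gstruct XF ET m W V E"
begin

lemma gsD1: "is_tree XF ET"
  apply (insert gs) apply (unfold gstruct_def) apply (elim conjE) apply assumption done

lemma gsD2: "inj_on m ET"
  apply (insert gs) apply (unfold gstruct_def) apply (elim conjE) apply assumption done

lemma gsD3: "m ` ET \<inter> XF = {}"
  apply (insert gs) apply (unfold gstruct_def) apply (elim conjE) apply assumption done

lemma gsD4: "\<forall>e\<in>ET. \<forall>x\<in>e. distinct (W x e) \<and> odd (length (W x e)) \<and>
      (\<exists>i. 2*i < length (W x e) \<and> W x e ! (2*i) = x) \<and> set (W x e) \<inter> (XF \<union> m ` ET) = {x}"
  apply (insert gs) apply (unfold gstruct_def) apply (elim conjE) apply assumption done

lemma gsD5: "\<forall>e\<in>ET. \<forall>x\<in>e. \<forall>e'\<in>ET. \<forall>x'\<in>e'. (x,e) \<noteq> (x',e') \<longrightarrow> (set (W x e) - {x}) \<inter> set (W x' e') = {}"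
  apply (insert gs) apply (unfold gstruct_def) apply (elim conjE) apply assumption done

lemma gsD6: "V = XF \<union> m ` ET \<union> (\<Union>e\<in>ET. \<Union>x\<in>e. set (W x e))"
  apply (insert gs) apply (unfold gstruct_def) apply (elim conjE) apply assumption done

lemma gsD7: "E = (\<Union>e\<in>ET. \<Union>x\<in>e. path_edges (m e # W x e @ [m e]))"
  apply (insert gs) apply (unfold gstruct_def) apply (elim conjE) apply assumption done

lemma g_tree: "is_tree XF ET" by (rule gsD1)
lemma g_inj: "inj_on m ET" by (rule gsD2)
lemma g_mXF: "e \<in> ET \<Longrightarrow> m e \<notin> XF" using gsD3 by blast
lemma g_V: "V = XF \<union> m ` ET \<union> (\<Union>e\<in>ET. \<Union>x\<in>e. set (W x e))" by (rule gsD6)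
lemma g_E: "E = (\<Union>e\<in>ET. \<Union>x\<in>e. path_edges (m e # W x e @ [m e]))" by (rule gsD7)

lemma g_gad:
  assumes "e \<in> ET" "x \<in> e"
  shows "distinct (W x e)" "odd (length (W x e))" "\<exists>i. 2*i < length (W x e) \<and> W x e ! (2*i) = x"
    "set (W x e) \<inter> (XF \<union> m ` ET) = {x}"
proof -
  have "distinct (W x e) \<and> odd (length (W x e)) \<and>
      (\<exists>i. 2*i < length (W x e) \<and> W x e ! (2*i) = x) \<and> set (W x e) \<inter> (XF \<union> m ` ET) = {x}"
    using gsD4 assms by blast
  then show "distinct (W x e)" "odd (length (W x e))" "\<exists>i. 2*i < length (W x e) \<and> W x e ! (2*i) = x"
    "set (W x e) \<inter> (XF \<union> m ` ET) = {x}" by auto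
qed

lemma g_disj:
  assumes "e \<in> ET" "x \<in> e" "e' \<in> ET" "x' \<in> e'" "(x,e) \<noteq> (x',e')"
  shows "(set (W x e) - {x}) \<inter> set (W x' e') = {}"
  using gsD5 assms by blast

lemma g_xXF: "e \<in> ET \<Longrightarrow> x \<in> e \<Longrightarrow> x \<in> XF"
  using wf_edge[of XF ET e] g_tree unfolding is_tree_def by blast

lemma g_xW: "e \<in> ET \<Longrightarrow> x \<in> e \<Longrightarrow> x \<in> set (W x e)"
  using g_gad(4) by blast

lemma g_me: "e \<in> ET \<Longrightarrow> x \<in> e \<Longrightarrow> m e \<notin> set (W x e)"
  using g_gad(4) g_mXF g_xXF by blast

lemma g_int: "e \<in> ET \<Longrightarrow> x \<in> e \<Longrightarrow> z \<in> set (W x e) \<Longrightarrow> z \<noteq> x \<Longrightarrow> z \<notin> XF \<and> z \<notin> m ` ET"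
  using g_gad(4) by blast

lemma g_other:
  assumes "e \<in> ET" "x \<in> e" "e' \<in> ET" "x' \<in> e'" "x \<in> set (W x' e')"
  shows "x' = x"
proof -
  have "x \<in> XF" by (rule g_xXF[OF assms(1,2)])
  then have "x \<in> set (W x' e') \<inter> (XF \<union> m ` ET)" using assms(5) by blast
  then show ?thesis using g_gad(4)[OF assms(3,4)] by simp
qed

lemma g_finV: "finite V"
proof -
  have "finite XF" using g_tree unfolding is_tree_def wf_graph_def by blast
  moreover have "finite ET" using g_tree unfolding is_tree_def wf_graph_def
  proof -
    have "ET \<subseteq> Pow XF" using g_tree wf_edge[of XF ET] unfolding is_tree_def by blast
    then show ?thesis using \<open>finite XF\<close> finite_subset by blast
  qed
  moreover have "\<forall>e\<in>ET. finite e" using g_tree wf_edge[of XF ET] unfolding is_tree_def by blast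
  ultimately show ?thesis using g_V by simp
qed

lemma g_consec_ne:
  assumes "e \<in> ET" "x \<in> e" "Suc i < length (m e # W x e @ [m e])"
  shows "(m e # W x e @ [m e]) ! i \<noteq> (m e # W x e @ [m e]) ! Suc i"
proof -
  let ?W = "W x e"
  have d: "distinct ?W" "m e \<notin> set ?W" using g_gad(1) g_me assms by auto
  have n: "0 < length ?W" using g_gad(2)[OF assms(1,2)] by (cases "W x e") auto
  have li: "Suc i < length ?W + 2" using assms(3) by simp
  show ?thesis
  proof (cases "i = 0")
    case True
    then show ?thesis using d n nth_mem[of 0 ?W] by (auto simp: nth_append)
  next
    case False
    show ?thesis
    proof (cases "Suc i \<le> length ?W")
      case True
      then have "(m e # W x e @ [m e]) ! i = ?W ! (i - 1)" "(m e # W x e @ [m e]) ! Suc i = ?W ! i"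
        using False by (auto simp: nth_append nth_Cons')
      moreover have "?W ! (i - 1) \<noteq> ?W ! i" using d(1) True False by (simp add: nth_eq_iff_index_eq)
      ultimately show ?thesis by simp
    next
      case c2: False
      then have "i = length ?W" using li by simp
      then have "(m e # W x e @ [m e]) ! i = ?W ! (i - 1)" "(m e # W x e @ [m e]) ! Suc i = m e"
        using False by (auto simp: nth_append nth_Cons')
      moreover have "?W ! (i - 1) \<noteq> m e"
      proof -
        have "i - 1 < length ?W" using n \<open>i = length ?W\<close> by simp
        then have "?W ! (i - 1) \<in> set ?W" by (rule nth_mem)
        then show ?thesis using d(2) by metis
      qed
      ultimately show ?thesis by simp
    qed
  qed
qed

lemma g_Lsub: "e \<in> ET \<Longrightarrow> x \<in> e \<Longrightarrow> set (m e # W x e @ [m e]) \<subseteq> V"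
  using g_V by auto

lemma g_edge:
  assumes "q \<in> E" shows "\<exists>a b. q = {a,b} \<and> a \<noteq> b \<and> a \<in> V \<and> b \<in> V"
proof -
  obtain e x where ex: "e \<in> ET" "x \<in> e" "q \<in> path_edges (m e # W x e @ [m e])"
    using assms g_E by blast
  then obtain i where i: "Suc i < length (m e # W x e @ [m e])"
    "q = {(m e # W x e @ [m e]) ! i, (m e # W x e @ [m e]) ! Suc i}"
    unfolding pe_iff by blast
  have "(m e # W x e @ [m e]) ! i \<in> V" "(m e # W x e @ [m e]) ! Suc i \<in> V"
    using g_Lsub[OF ex(1,2)] i(1) nth_mem[of i "m e # W x e @ [m e]"]
      nth_mem[of "Suc i" "m e # W x e @ [m e]"] by auto
  then show ?thesis using i g_consec_ne[OF ex(1,2) i(1)] by blast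
qed

lemma g_pe_E: "e \<in> ET \<Longrightarrow> x \<in> e \<Longrightarrow> path_edges (m e # W x e @ [m e]) \<subseteq> E"
  using g_E by blast

lemma g_local:
  assumes "e \<in> ET" "x \<in> e" "z \<in> set (W x e)" "z = x \<longrightarrow> (\<forall>e'\<in>ET. x \<in> e' \<longrightarrow> e' = e)"
    "{z,b} \<in> E"
  shows "{z,b} \<in> path_edges (m e # W x e @ [m e])"
proof -
  obtain e' x' where ex: "e' \<in> ET" "x' \<in> e'" "{z,b} \<in> path_edges (m e' # W x' e' @ [m e'])"
    using assms(5) g_E by blast
  have "z \<in> set (m e' # W x' e' @ [m e'])" using pe_sub_set[OF ex(3)] by blast
  then have zin: "z = m e' \<or> z \<in> set (W x' e')" by auto
  have "z \<noteq> m e'"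
  proof
    assume "z = m e'"
    then have "z \<in> m ` ET" using ex(1) by blast
    then have "z = x" using g_gad(4)[OF assms(1,2)] assms(3) by blast
    then show False using \<open>z = m e'\<close> g_xXF[OF assms(1,2)] g_mXF[OF ex(1)] by simp
  qed
  then have z2: "z \<in> set (W x' e')" using zin by blast
  have "(x,e) = (x',e')"
  proof (rule ccontr)
    assume ne: "(x,e) \<noteq> (x',e')"
    show False
    proof (cases "z = x")
      case False
      then show False using g_disj[OF assms(1,2) ex(1,2) ne] assms(3) z2 by blast
    next
      case True
      then have "x' = x" using g_other[OF assms(1,2) ex(1,2)] z2 by simp
      then have "e' = e" using assms(4) True ex(1,2) by blast
      then show False using ne \<open>x' = x\<close> by simp
    qed
  qed
  then show ?thesis using ex(3) by simp
qed

lemma g_nbhd: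
  assumes "e \<in> ET" "x \<in> e" "z \<in> set (W x e)" "z = x \<longrightarrow> (\<forall>e'\<in>ET. x \<in> e' \<longrightarrow> e' = e)"
  shows "closed_nbhd V E z \<subseteq> insert z {b. {z,b} \<in> path_edges (m e # W x e @ [m e])}"
proof
  fix b assume "b \<in> closed_nbhd V E z"
  then have "b = z \<or> {b,z} \<in> E" unfolding closed_nbhd_def by blast
  then show "b \<in> insert z {b. {z,b} \<in> path_edges (m e # W x e @ [m e])}"
    using g_local[OF assms, of b] by (auto simp: insert_commute)
qed

lemma g_parity:
  assumes X: "\<forall>q\<in>E. card (q \<inter> X) = 1" and XF: "XF \<subseteq> X" and ex: "e \<in> ET" "x \<in> e"
  shows "\<forall>j<length (W x e). (W x e ! j \<in> X \<longleftrightarrow> even j)" "m e \<notin> X"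
proof -
  let ?W = "W x e" and ?L = "m e # W x e @ [m e]"
  have alt: "a \<in> X \<longleftrightarrow> b \<notin> X" if "{a,b} \<in> E" "a \<noteq> b" for a b
  proof -
    have "card ({a,b} \<inter> X) = 1" using X that(1) by blast
    then show ?thesis using that(2)
      by (cases "a \<in> X"; cases "b \<in> X") (auto simp: Int_insert_left)
  qed
  have step: "(?W ! j \<in> X) \<longleftrightarrow> \<not> (?W ! Suc j \<in> X)" if "Suc j < length ?W" for j
  proof -
    have "{?L ! Suc j, ?L ! Suc (Suc j)} \<in> path_edges ?L" unfolding pe_iff
      using that by (intro exI[of _ "Suc j"]) auto
    then have "{?W ! j, ?W ! Suc j} \<in> E" using g_pe_E[OF ex] that by (auto simp: nth_append)
    moreover have "?W ! j \<noteq> ?W ! Suc j" using g_gad(1)[OF ex] that by (simp add: nth_eq_iff_index_eq)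
    ultimately show ?thesis using alt by blast
  qed
  have f0: "j < length ?W \<Longrightarrow> (?W ! j \<in> X \<longleftrightarrow> ((?W ! 0 \<in> X) \<longleftrightarrow> even j))" for j
  proof (induction j)
    case (Suc j) then show ?case using step[of j] by auto
  qed simp
  obtain i where i: "2*i < length ?W" "?W ! (2*i) = x" using g_gad(3)[OF ex] by blast
  have "x \<in> X" using XF g_xXF[OF ex] by blast
  then have w0: "?W ! 0 \<in> X" using f0[OF i(1)] i(2) by simp
  show "\<forall>j<length ?W. (?W ! j \<in> X \<longleftrightarrow> even j)" using f0 w0 by blast
  have "length ?W > 0" using i(1) by arith
  have "{?L ! 0, ?L ! 1} \<in> path_edges ?L" unfolding pe_iff
    by (intro exI[of _ 0]) auto
  then have "{m e, ?W ! 0} \<in> E" using g_pe_E[OF ex] \<open>length ?W > 0\<close> by (auto simp: nth_append)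
  moreover have "m e \<noteq> ?W ! 0" using g_me[OF ex] \<open>length ?W > 0\<close> nth_mem by metis
  ultimately show "m e \<notin> X" using alt w0 by blast
qed


lemma g_remove_gs:
  assumes "{l,p} \<in> ET" "l \<noteq> p" "\<forall>e'\<in>ET. l \<in> e' \<longrightarrow> e' = {l,p}"
  shows "gstruct (XF - {l}) (ET - {{l,p}}) m W
           ((XF - {l}) \<union> m ` (ET - {{l,p}}) \<union> (\<Union>e\<in>ET - {{l,p}}. \<Union>x\<in>e. set (W x e)))
           (\<Union>e\<in>ET - {{l,p}}. \<Union>x\<in>e. path_edges (m e # W x e @ [m e]))"
proof -
  let ?ET = "ET - {{l,p}}" and ?XF = "XF - {l}"
  have t: "is_tree ?XF ?ET" by (rule tree_remove[OF g_tree assms])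
  have i: "inj_on m ?ET" using g_inj inj_on_subset by blast
  have d: "m ` ?ET \<inter> ?XF = {}" using g_mXF by blast
  have gad: "\<forall>e\<in>?ET. \<forall>x\<in>e. distinct (W x e) \<and> odd (length (W x e)) \<and>
      (\<exists>i. 2*i < length (W x e) \<and> W x e ! (2*i) = x) \<and> set (W x e) \<inter> (?XF \<union> m ` ?ET) = {x}"
  proof (intro ballI)
    fix e x assume ex: "e \<in> ?ET" "x \<in> e"
    have ex': "e \<in> ET" using ex by blast
    have "x \<noteq> l" using ex assms(3) by blast
    have s: "set (W x e) \<inter> (XF \<union> m ` ET) = {x}" by (rule g_gad(4)[OF ex' ex(2)])
    have "x \<in> ?XF" using g_xXF[OF ex' ex(2)] \<open>x \<noteq> l\<close> by blast
    then have "set (W x e) \<inter> (?XF \<union> m ` ?ET) = {x}" using s g_xW[OF ex' ex(2)] by blast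
    then show "distinct (W x e) \<and> odd (length (W x e)) \<and>
      (\<exists>i. 2*i < length (W x e) \<and> W x e ! (2*i) = x) \<and> set (W x e) \<inter> (?XF \<union> m ` ?ET) = {x}"
      using g_gad[OF ex' ex(2)] by blast
  qed
  have dj: "\<forall>e\<in>?ET. \<forall>x\<in>e. \<forall>e'\<in>?ET. \<forall>x'\<in>e'. (x,e) \<noteq> (x',e') \<longrightarrow> (set (W x e) - {x}) \<inter> set (W x' e') = {}"
    using g_disj by blast
  show ?thesis unfolding gstruct_def using t i d gad dj by (simp only: simp_thms)
qed

end


definition Vr :: "'a set \<Rightarrow> 'a set set \<Rightarrow> ('a set \<Rightarrow> 'a) \<Rightarrow> ('a \<Rightarrow> 'a set \<Rightarrow> 'a list) \<Rightarrow> 'a \<Rightarrow> 'a \<Rightarrow> 'a set" where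
  "Vr XF ET m W l p = (XF - {l}) \<union> m ` (ET - {{l,p}}) \<union> (\<Union>e\<in>ET - {{l,p}}. \<Union>x\<in>e. set (W x e))"

definition Er :: "'a set set \<Rightarrow> ('a set \<Rightarrow> 'a) \<Rightarrow> ('a \<Rightarrow> 'a set \<Rightarrow> 'a list) \<Rightarrow> 'a \<Rightarrow> 'a \<Rightarrow> 'a set set" where
  "Er ET m W l p = (\<Union>e\<in>ET - {{l,p}}. \<Union>x\<in>e. path_edges (m e # W x e @ [m e]))"

context
  fixes XF ET m W V E l p
  assumes gs: "gstruct XF ET m W V E"
    and lf: "{l,p} \<in> ET" "l \<noteq> p" "\<forall>e'\<in>ET. l \<in> e' \<longrightarrow> e' = {l,p}"
begin

lemma r_gs: "gstruct (XF - {l}) (ET - {{l,p}}) m W (Vr XF ET m W l p) (Er ET m W l p)"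
  unfolding Vr_def Er_def by (rule g_remove_gs[OF gs lf])

lemma r_l: "l \<in> {l,p}" and r_p: "p \<in> {l,p}" by auto

lemma r_Vsub: "Vr XF ET m W l p \<subseteq> V"
  unfolding Vr_def using g_V[OF gs] by blast

lemma r_Esub: "Er ET m W l p \<subseteq> E"
  unfolding Er_def using g_E[OF gs] by blast

lemma r_pV: "p \<in> Vr XF ET m W l p"
  unfolding Vr_def using g_xXF[OF gs lf(1) r_p] lf(2) by blast

lemma r_me: "m {l,p} \<notin> Vr XF ET m W l p"
proof
  assume a: "m {l,p} \<in> Vr XF ET m W l p"
  have "m {l,p} \<notin> XF" using g_mXF[OF gs lf(1)] .
  moreover have "m {l,p} \<notin> m ` (ET - {{l,p}})"
    using g_inj[OF gs] lf(1) by (auto simp: inj_on_def)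
  moreover have "m {l,p} \<notin> set (W x e)" if "e \<in> ET - {{l,p}}" "x \<in> e" for e x
  proof
    assume "m {l,p} \<in> set (W x e)"
    then have "m {l,p} \<in> set (W x e) \<inter> (XF \<union> m ` ET)" using lf(1) by blast
    then have "m {l,p} = x" using g_gad(4)[OF gs, of e x] that by blast
    then show False using g_xXF[OF gs, of e x] that \<open>m {l,p} \<notin> XF\<close> by blast
  qed
  ultimately show False using a unfolding Vr_def by blast
qed

lemma r_W1: "set (W l {l,p}) \<inter> Vr XF ET m W l p = {}"
proof (rule equals0I)
  fix z assume z: "z \<in> set (W l {l,p}) \<inter> Vr XF ET m W l p"
  have s: "set (W l {l,p}) \<inter> (XF \<union> m ` ET) = {l}" by (rule g_gad(4)[OF gs lf(1) r_l])
  consider "z \<in> XF - {l}" | "z \<in> m ` (ET - {{l,p}})" | e x where "e \<in> ET - {{l,p}}" "x \<in> e" "z \<in> set (W x e)"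
    using z unfolding Vr_def by blast
  then show False
  proof cases
    case 1 then show False using s z by blast
  next
    case 2
    then have "z = l" using s z by blast
    then show False using 2 g_mXF[OF gs] g_xXF[OF gs lf(1) r_l] by blast
  next
    case 3
    show False
    proof (cases "z = l")
      case True
      then have "x = l" using g_other[OF gs lf(1) r_l, of e x] 3 by blast
      then show False using lf(3) 3 by blast
    next
      case False
      have "(l, {l,p}) \<noteq> (x, e)" using 3 by auto
      then show False using g_disj[OF gs lf(1) r_l, of e x] 3 z False by blast
    qed
  qed
qed

lemma r_W2: "set (W p {l,p}) \<inter> Vr XF ET m W l p \<subseteq> {p}"
proof
  fix z assume z: "z \<in> set (W p {l,p}) \<inter> Vr XF ET m W l p"
  have s: "set (W p {l,p}) \<inter> (XF \<union> m ` ET) = {p}" by (rule g_gad(4)[OF gs lf(1) r_p])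
  show "z \<in> {p}"
  proof (rule ccontr)
    assume zp: "z \<notin> {p}"
    consider "z \<in> XF - {l}" | "z \<in> m ` (ET - {{l,p}})" | e x where "e \<in> ET - {{l,p}}" "x \<in> e" "z \<in> set (W x e)"
      using z unfolding Vr_def by blast
    then show False
    proof cases
      case 1 then show False using s z zp by blast
    next
      case 2 then show False using s z zp by blast
    next
      case 3
      have "(p, {l,p}) \<noteq> (x, e)" using 3 by auto
      then show False using g_disj[OF gs lf(1) r_p, of e x] 3 z zp by blast
    qed
  qed
qed

lemma r_W12: "set (W l {l,p}) \<inter> set (W p {l,p}) = {}"
proof -
  have "(l, {l,p}) \<noteq> (p, {l,p})" using lf(2) by simp
  then have a: "(set (W l {l,p}) - {l}) \<inter> set (W p {l,p}) = {}" by (rule g_disj[OF gs lf(1) r_l lf(1) r_p])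
  have "l \<notin> set (W p {l,p})"
  proof
    assume "l \<in> set (W p {l,p})"
    then have "p = l" by (rule g_other[OF gs lf(1) r_l lf(1) r_p])
    then show False using lf(2) by simp
  qed
  then show ?thesis using a by blast
qed

lemma r_cover: "V \<subseteq> Vr XF ET m W l p \<union> {m {l,p}} \<union> set (W l {l,p}) \<union> set (W p {l,p})"
proof
  fix v assume v: "v \<in> V"
  consider "v \<in> XF" | "v \<in> m ` ET" | e x where "e \<in> ET" "x \<in> e" "v \<in> set (W x e)"
    using v g_V[OF gs] by blast
  then show "v \<in> Vr XF ET m W l p \<union> {m {l,p}} \<union> set (W l {l,p}) \<union> set (W p {l,p})"
  proof cases
    case 1
    then show ?thesis using g_xW[OF gs lf(1) r_l] unfolding Vr_def by (cases "v = l") auto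
  next
    case 2 then show ?thesis unfolding Vr_def by (cases "v = m {l,p}") auto
  next
    case 3
    show ?thesis
    proof (cases "e = {l,p}")
      case True then show ?thesis using 3 by auto
    next
      case False then show ?thesis using 3 unfolding Vr_def by blast
    qed
  qed
qed

lemma r_edge:
  assumes "w \<in> Vr XF ET m W l p" "{w,b} \<in> E"
  shows "{w,b} \<in> Er ET m W l p \<or> (w = p \<and> {p,b} \<in> path_edges (m {l,p} # W p {l,p} @ [m {l,p}]))"
proof -
  obtain e x where ex: "e \<in> ET" "x \<in> e" "{w,b} \<in> path_edges (m e # W x e @ [m e])"
    using assms(2) g_E[OF gs] by blast
  show ?thesis
  proof (cases "e = {l,p}")
    case False
    then show ?thesis using ex unfolding Er_def by blast
  next
    case True
    have "w \<in> set (m e # W x e @ [m e])" using pe_sub_set[OF ex(3)] by blast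
    then have wW: "w \<in> set (W x e)" using r_me assms(1) True by auto
    have "x = l \<or> x = p" using ex(2) True by blast
    then have "x = p" using wW r_W1 assms(1) True by blast
    then have "w = p" using wW r_W2 assms(1) True by blast
    then show ?thesis using ex(3) True \<open>x = p\<close> by simp
  qed
qed

end

lemma take_drop_split:
  assumes "distinct xs" "k < length xs"
  shows "set (take k xs) \<union> set (drop (Suc k) xs) = set xs - {xs!k}"
proof -
  have e: "xs = take k xs @ xs!k # drop (Suc k) xs" by (rule id_take_nth_drop[OF assms(2)])
  have "distinct (take k xs @ xs!k # drop (Suc k) xs)" using assms(1) e by simp
  then have "xs!k \<notin> set (take k xs)" "xs!k \<notin> set (drop (Suc k) xs)" by auto
  moreover have "set xs = set (take k xs) \<union> {xs!k} \<union> set (drop (Suc k) xs)"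
    by (subst e) auto
  ultimately show ?thesis by blast
qed

lemma pe_ext_rev: "path_edges (mu # rev W @ [mu]) = path_edges (mu # W @ [mu])"
proof -
  have "rev (mu # W @ [mu]) = mu # rev W @ [mu]" by simp
  then show ?thesis using pe_rev[of "mu # W @ [mu]"] by simp
qed

lemma odd_len: "odd n \<Longrightarrow> \<exists>k. n = 2*k+1"
  by (metis oddE)

lemma staller_main:
  assumes "gstruct XF ET m W V E" "\<forall>q\<in>E. card (q \<inter> X) = 1" "XF \<subseteq> X"
  shows "staller_wins V E (V - X) {} V True"
  using assms
proof (induction "card XF" arbitrary: XF ET V E rule: less_induct)
  case less
  note gs = less.prems(1)
  have tree: "is_tree XF ET" by (rule g_tree[OF gs])
  have finXF: "finite XF" "XF \<noteq> {}" using tree unfolding is_tree_def wf_graph_def by auto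
  have finV: "finite V" by (rule g_finV[OF gs])
  show ?case
  proof (cases "card XF \<le> 1")
    case True
    have "card XF > 0" using finXF by (simp add: card_gt_0_iff)
    then have c1: "card XF = 1" using True by linarith
    then obtain x where x: "XF = {x}" by (rule card_1_singletonE)
    have ET: "ET = {}" by (rule tree_single[OF tree c1])
    have V: "V = {x}" using g_V[OF gs] ET x by simp
    have E: "E = {}" using g_E[OF gs] ET by simp
    have "x \<in> X" using less.prems(3) x by blast
    show ?thesis unfolding V E
      by (rule finish[of _ x]) (use \<open>x \<in> X\<close> in \<open>auto simp: closed_nbhd_def\<close>)
  next
    case False
    obtain l p where lf: "{l,p} \<in> ET" "l \<noteq> p" "\<forall>e'\<in>ET. l \<in> e' \<longrightarrow> e' = {l,p}"
      using tree_leaf[OF tree False] by blast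
    let ?mu = "m {l,p}" and ?W1 = "W l {l,p}" and ?W2 = "W p {l,p}"
      and ?V' = "Vr XF ET m W l p" and ?E' = "Er ET m W l p"
    have lin: "l \<in> {l,p}" and pin: "p \<in> {l,p}" by auto
    have lXF: "l \<in> XF" by (rule g_xXF[OF gs lf(1) lin])
    have IH: "staller_wins ?V' ?E' (?V' - X) {} ?V' True"
    proof (rule less.hyps)
      show "card (XF - {l}) < card XF" using finXF lXF by (meson card_Diff1_less)
      show "gstruct (XF - {l}) (ET - {{l,p}}) m W ?V' ?E'" by (rule r_gs[OF gs lf])
      show "\<forall>q\<in>?E'. card (q \<inter> X) = 1" using less.prems(2) r_Esub[OF gs lf] by blast
      show "XF - {l} \<subseteq> X" using less.prems(3) by blast
    qed
    have d1: "distinct ?W1" "?mu \<notin> set ?W1" using g_gad(1)[OF gs lf(1) lin] g_me[OF gs lf(1) lin] by auto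
    have d2: "distinct ?W2" "?mu \<notin> set ?W2" using g_gad(1)[OF gs lf(1) pin] g_me[OF gs lf(1) pin] by auto
    obtain k1 where k1: "length ?W1 = 2*k1+1" using odd_len g_gad(2)[OF gs lf(1) lin] by blast
    obtain k2 where k2: "length ?W2 = 2*k2+1" using odd_len g_gad(2)[OF gs lf(1) pin] by blast
    obtain i2 where i2: "2*i2 < length ?W2" "?W2 ! (2*i2) = p" using g_gad(3)[OF gs lf(1) pin] by blast
    have par1: "\<forall>j<length ?W1. (?W1 ! j \<in> X \<longleftrightarrow> even j)"
      using g_parity(1)[OF gs less.prems(2,3) lf(1) lin] .
    have par2: "\<forall>j<length ?W2. (?W2 ! j \<in> X \<longleftrightarrow> even j)"
      using g_parity(1)[OF gs less.prems(2,3) lf(1) pin] .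
    have W1V: "set ?W1 \<subseteq> V" and W2V: "set ?W2 \<subseteq> V" and muV: "?mu \<in> V"
      using g_V[OF gs] lf(1) by auto
    have W12: "set ?W1 \<inter> set ?W2 = {}" by (rule r_W12[OF gs lf])
    have nb2: "closed_nbhd V E z \<subseteq> insert z {b. {z,b} \<in> path_edges (?mu # ?W2 @ [?mu])}"
      if "z \<in> set ?W2" "z \<noteq> p" for z
      by (rule g_nbhd[OF gs lf(1) pin that(1)]) (use that(2) in simp)
    have "staller_wins V E (V - X) {?mu} (V - {?mu}) False"
    proof (rule staller_wins.dommove)
      have "l \<in> V" using g_xW[OF gs lf(1) lin] W1V by blast
      moreover have "l \<noteq> ?mu" using g_xW[OF gs lf(1) lin] d1(2) by metis
      ultimately show "V - {?mu} \<noteq> {}" by blast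
      show "\<forall>w\<in>V - {?mu}. staller_wins V E (V - X) {?mu} (V - {?mu} - {w}) True"
      proof
        fix w assume w: "w \<in> V - {?mu}"
        let ?U0 = "V - {?mu} - {w}"
        have finU0: "finite ?U0" using finV by simp
        show "staller_wins V E (V - X) {?mu} ?U0 True"
        proof (cases "w \<in> set ?W1")
          case False
          show ?thesis
          proof (rule xpath[of ?U0 ?mu "{?mu}" ?W1 k1])
            show "set ?W1 \<subseteq> ?U0" using W1V d1 False by blast
            show "\<forall>j\<le>k1. ?W1 ! (2*j) \<in> V - (V - X) \<and>
              closed_nbhd V E (?W1 ! (2*j)) \<subseteq> insert (?W1 ! (2*j)) {b. {?W1 ! (2*j), b} \<in> path_edges (?mu # ?W1 @ [?mu])}"
            proof (intro allI impI conjI)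
              fix j assume j: "j \<le> k1"
              then have jl: "2*j < length ?W1" using k1 by simp
              then have zin: "?W1 ! (2*j) \<in> set ?W1" by simp
              show "?W1 ! (2*j) \<in> V - (V - X)" using par1 jl zin W1V by auto
              show "closed_nbhd V E (?W1 ! (2*j)) \<subseteq> insert (?W1 ! (2*j)) {b. {?W1 ! (2*j), b} \<in> path_edges (?mu # ?W1 @ [?mu])}"
                by (rule g_nbhd[OF gs lf(1) lin zin]) (use lf(3) in blast)
            qed
          qed (use finU0 d1 k1 in auto)
        next
          case True
          have wnot2: "w \<notin> set ?W2" using True W12 by blast
          define YL where "YL = (\<lambda>j. ?W2 ! (2*j+1)) ` {..<i2}"
          define YR where "YR = (\<lambda>j. rev ?W2 ! (2*j+1)) ` {..<k2 - i2}"
          let ?U1 = "?U0 - set (take (2*i2) ?W2)"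
          let ?U2 = "?U1 - set (take (2*(k2 - i2)) (rev ?W2))"
          have i2k2: "i2 \<le> k2" using i2(1) k2 by simp
          have trev: "take (2*(k2 - i2)) (rev ?W2) = rev (drop (Suc (2*i2)) ?W2)"
          proof -
            have a: "length ?W2 - 2*(k2 - i2) = Suc (2*i2)" using k2 i2k2 by simp
            show ?thesis by (simp only: take_rev a)
          qed
          have split: "set (take (2*i2) ?W2) \<union> set (drop (Suc (2*i2)) ?W2) = set ?W2 - {p}"
            using take_drop_split[OF d2(1) i2(1)] i2(2) by simp
          have U2eq: "?U2 = ?U0 - (set ?W2 - {p})" using trev split by auto
          have A: "staller_wins V E (V - X) ({?mu} \<union> YL \<union> YR) ?U2 True"
          proof (rule sim[OF IH])
            show "?V' \<subseteq> ?U2"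
              using U2eq r_Vsub[OF gs lf] r_me[OF gs lf] r_W1[OF gs lf] r_W2[OF gs lf] True by blast
            show "{} \<subseteq> {?mu} \<union> YL \<union> YR" by simp
            show "finite ?U2" using finU0 by simp
            show "\<forall>x\<in>?V' - (?V' - X). x \<in> V - (V - X) \<and> closed_nbhd V E x \<subseteq> ({?mu} \<union> YL \<union> YR) \<union> closed_nbhd ?V' ?E' x"
            proof (intro ballI conjI)
              fix x assume x: "x \<in> ?V' - (?V' - X)"
              then have xV': "x \<in> ?V'" and xX: "x \<in> X" by auto
              show "x \<in> V - (V - X)" using xV' xX r_Vsub[OF gs lf] by blast
              show "closed_nbhd V E x \<subseteq> ({?mu} \<union> YL \<union> YR) \<union> closed_nbhd ?V' ?E' x"
              proof
                fix b assume b: "b \<in> closed_nbhd V E x"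
                show "b \<in> ({?mu} \<union> YL \<union> YR) \<union> closed_nbhd ?V' ?E' x"
                proof (cases "b = x")
                  case True then show ?thesis unfolding closed_nbhd_def by blast
                next
                  case bx: False
                  then have bE: "{x,b} \<in> E" "b \<in> V" using b unfolding closed_nbhd_def by (auto simp: insert_commute)
                  from r_edge[OF gs lf xV' bE(1)]
                  show ?thesis
                  proof
                    assume e': "{x,b} \<in> ?E'"
                    obtain a c where ac: "{x,b} = {a,c}" "a \<in> ?V'" "c \<in> ?V'"
                      using g_edge[OF r_gs[OF gs lf] e'] by blast
                    have "b \<in> ?V'" using ac by (auto simp: doubleton_eq_iff)
                    then show ?thesis using e' unfolding closed_nbhd_def by (auto simp: insert_commute)
                  next
                    assume xp: "x = p \<and> {p,b} \<in> path_edges (?mu # ?W2 @ [?mu])"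
                    then have "{?W2 ! (2*i2), b} \<in> path_edges (?mu # ?W2 @ [?mu])" using i2(2) by simp
                    from pe_nbr[OF d2 i2(1) this]
                    have "b = ?mu \<or> (0 < 2*i2 \<and> b = ?W2 ! (2*i2 - 1)) \<or> (Suc (2*i2) < length ?W2 \<and> b = ?W2 ! Suc (2*i2))" .
                    moreover have "?W2 ! (2*i2 - 1) \<in> YL" if "0 < 2*i2"
                    proof -
                      have e: "2*i2 - 1 = 2*(i2 - 1) + 1" using that by simp
                      show ?thesis unfolding YL_def e by (rule image_eqI[of _ _ "i2 - 1"]) (use that in auto)
                    qed
                    moreover have "?W2 ! Suc (2*i2) \<in> YR" if "Suc (2*i2) < length ?W2"
                    proof -
                      have lt: "i2 < k2" using that k2 by simp
                      have "rev ?W2 ! (2*(k2 - i2 - 1)+1) = ?W2 ! (length ?W2 - Suc (2*(k2 - i2 - 1)+1))"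
                        using k2 lt by (intro rev_nth) simp
                      also have "length ?W2 - Suc (2*(k2 - i2 - 1)+1) = Suc (2*i2)" using k2 lt by simp
                      finally have "?W2 ! Suc (2*i2) = rev ?W2 ! (2*(k2 - i2 - 1)+1)" by simp
                      then show ?thesis unfolding YR_def
                        by (rule image_eqI[of _ _ "k2 - i2 - 1"]) (use lt in auto)
                    qed
                    ultimately show ?thesis by blast
                  qed
                qed
              qed
            qed
          qed
          have B: "staller_wins V E (V - X) ({?mu} \<union> YL) ?U1 True"
          proof (rule chainL[of ?U1 ?mu "{?mu} \<union> YL" "rev ?W2" "k2 - i2"])
            show "finite ?U1" using finU0 by simp
            show "?mu \<in> {?mu} \<union> YL" by simp
            show "distinct (rev ?W2)" using d2 by simp
            show "?mu \<notin> set (rev ?W2)" using d2 by simp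
            show "2*(k2 - i2) < length (rev ?W2)" using k2 by simp
            have "set (take (2*i2) ?W2) \<inter> set (drop (Suc (2*i2)) ?W2) = {}"
              using set_take_disj_set_drop_if_distinct[OF d2(1), of "2*i2" "Suc (2*i2)"] by simp
            moreover have "set (drop (Suc (2*i2)) ?W2) \<subseteq> set ?W2" by (rule set_drop_subset)
            ultimately show "set (take (2*(k2 - i2)) (rev ?W2)) \<subseteq> ?U1"
              unfolding trev using W2V d2 wnot2 by auto
            show "\<forall>j<k2 - i2. rev ?W2 ! (2*j) \<in> V - (V - X) \<and>
              closed_nbhd V E (rev ?W2 ! (2*j)) \<subseteq> insert (rev ?W2 ! (2*j)) {b. {rev ?W2 ! (2*j), b} \<in> path_edges (?mu # rev ?W2 @ [?mu])}"
            proof (intro allI impI conjI)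
              fix j assume j: "j < k2 - i2"
              have rj: "rev ?W2 ! (2*j) = ?W2 ! (2*k2 - 2*j)"
                using k2 j by (simp add: rev_nth)
              have idx: "2*k2 - 2*j < length ?W2" "even (2*k2 - 2*j)" using k2 j by auto
              have zin: "?W2 ! (2*k2 - 2*j) \<in> set ?W2" using idx by simp
              have zp: "?W2 ! (2*k2 - 2*j) \<noteq> p"
              proof
                assume "?W2 ! (2*k2 - 2*j) = p"
                then have "?W2 ! (2*k2 - 2*j) = ?W2 ! (2*i2)" using i2(2) by simp
                then have "2*k2 - 2*j = 2*i2" using d2(1) idx(1) i2(1) by (simp add: nth_eq_iff_index_eq)
                then show False using j by simp
              qed
              show "rev ?W2 ! (2*j) \<in> V - (V - X)" unfolding rj using par2 idx zin W2V by auto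
              show "closed_nbhd V E (rev ?W2 ! (2*j)) \<subseteq> insert (rev ?W2 ! (2*j)) {b. {rev ?W2 ! (2*j), b} \<in> path_edges (?mu # rev ?W2 @ [?mu])}"
                unfolding rj pe_ext_rev by (rule nb2[OF zin zp])
            qed
            show "staller_wins V E (V - X) ({?mu} \<union> YL \<union> (\<lambda>j. rev ?W2 ! (2*j+1)) ` {..<k2 - i2}) (?U1 - set (take (2*(k2 - i2)) (rev ?W2))) True"
              using A unfolding YR_def .
          qed
          show ?thesis
          proof (rule chainL[of ?U0 ?mu "{?mu}" ?W2 i2])
            show "set (take (2*i2) ?W2) \<subseteq> ?U0" using W2V d2 wnot2 set_take_subset[of "2*i2" ?W2] by blast
            show "\<forall>j<i2. ?W2 ! (2*j) \<in> V - (V - X) \<and>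
              closed_nbhd V E (?W2 ! (2*j)) \<subseteq> insert (?W2 ! (2*j)) {b. {?W2 ! (2*j), b} \<in> path_edges (?mu # ?W2 @ [?mu])}"
            proof (intro allI impI conjI)
              fix j assume j: "j < i2"
              have idx: "2*j < length ?W2" using j i2(1) by simp
              have zin: "?W2 ! (2*j) \<in> set ?W2" using idx by simp
              have zp: "?W2 ! (2*j) \<noteq> p"
              proof
                assume "?W2 ! (2*j) = p"
                then have "?W2 ! (2*j) = ?W2 ! (2*i2)" using i2(2) by simp
                then have "2*j = 2*i2" using d2(1) idx i2(1) by (simp add: nth_eq_iff_index_eq)
                then show False using j by simp
              qed
              show "?W2 ! (2*j) \<in> V - (V - X)" using par2 idx zin W2V by auto
              show "closed_nbhd V E (?W2 ! (2*j)) \<subseteq> insert (?W2 ! (2*j)) {b. {?W2 ! (2*j), b} \<in> path_edges (?mu # ?W2 @ [?mu])}"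
                by (rule nb2[OF zin zp])
            qed
            show "staller_wins V E (V - X) ({?mu} \<union> (\<lambda>j. ?W2 ! (2*j+1)) ` {..<i2}) (?U0 - set (take (2*i2) ?W2)) True"
              using B unfolding YL_def .
          qed (use finU0 d2 i2 in auto)
        qed
      qed
    qed
    then show ?thesis using muV by (intro staller_wins.stmove[of ?mu V]) auto
  qed
qed

definition fam_disj :: "'a set set \<Rightarrow> bool" where
  "fam_disj P \<longleftrightarrow> (\<forall>q\<in>P. \<forall>q'\<in>P. q \<noteq> q' \<longrightarrow> q \<inter> q' = {})"

lemma disj_sets: "q \<subseteq> S1 \<Longrightarrow> q' \<subseteq> S2 \<Longrightarrow> S1 \<inter> S2 = {} \<Longrightarrow> q \<inter> q' = {}"
  by blast

lemma fam3:
  assumes "fam_disj A" "fam_disj B" "fam_disj C" "\<Union>A \<subseteq> SA" "\<Union>B \<subseteq> SB" "\<Union>C \<subseteq> SC"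
    "SA \<inter> SB = {}" "SA \<inter> SC = {}" "SB \<inter> SC = {}"
  shows "fam_disj (A \<union> B \<union> C)"
  unfolding fam_disj_def
proof (intro ballI impI)
  fix q q' assume q: "q \<in> A \<union> B \<union> C" "q' \<in> A \<union> B \<union> C" "q \<noteq> q'"
  have sA: "r \<subseteq> SA" if "r \<in> A" for r using that assms(4) by blast
  have sB: "r \<subseteq> SB" if "r \<in> B" for r using that assms(5) by blast
  have sC: "r \<subseteq> SC" if "r \<in> C" for r using that assms(6) by blast
  have dA: "r \<inter> r' = {}" if "r \<in> A" "r' \<in> A" "r \<noteq> r'" for r r' using that assms(1) unfolding fam_disj_def by blast
  have dB: "r \<inter> r' = {}" if "r \<in> B" "r' \<in> B" "r \<noteq> r'" for r r' using that assms(2) unfolding fam_disj_def by blast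
  have dC: "r \<inter> r' = {}" if "r \<in> C" "r' \<in> C" "r \<noteq> r'" for r r' using that assms(3) unfolding fam_disj_def by blast
  have sBA: "SB \<inter> SA = {}" "SC \<inter> SA = {}" "SC \<inter> SB = {}" using assms(7,8,9) by auto
  from q(1) consider "q \<in> A" | "q \<in> B" | "q \<in> C" by blast
  then show "q \<inter> q' = {}"
  proof cases
    case 1
    from q(2) consider "q' \<in> A" | "q' \<in> B" | "q' \<in> C" by blast
    then show ?thesis
      by cases (use 1 q(3) dA disj_sets[OF sA sB assms(7)] disj_sets[OF sA sC assms(8)] in blast)+
  next
    case 2
    from q(2) consider "q' \<in> A" | "q' \<in> B" | "q' \<in> C" by blast
    then show ?thesis
      by cases (use 2 q(3) dB disj_sets[OF sB sA sBA(1)] disj_sets[OF sB sC assms(9)] in blast)+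
  next
    case 3
    from q(2) consider "q' \<in> A" | "q' \<in> B" | "q' \<in> C" by blast
    then show ?thesis
      by cases (use 3 q(3) dC disj_sets[OF sC sA sBA(2)] disj_sets[OF sC sB sBA(3)] in blast)+
  qed
qed

lemma fam_pairs2: "distinct xs \<Longrightarrow> fam_disj (pairs2 xs)"
  unfolding fam_disj_def using pairs2_disj by blast

definition fullF :: "'a list \<Rightarrow> 'a \<Rightarrow> 'a set set" where
  "fullF W mu = pairs2 (W @ [mu])"

definition stdF :: "'a list \<Rightarrow> nat \<Rightarrow> 'a set set" where
  "stdF W j = pairs2 (take (2*j) W) \<union> pairs2 (drop (Suc (2*j)) W)"

lemma pe_sub_ext: "path_edges W \<subseteq> path_edges (mu # W @ [mu])"
  using pe_append[of W "[mu]"] pe_Cons_sub[of "W @ [mu]" mu] by auto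

lemma fullF_E: "fullF W mu \<subseteq> path_edges (mu # W @ [mu])"
  unfolding fullF_def using pairs2_pe[of "W @ [mu]"] pe_Cons_sub[of "W @ [mu]" mu] by blast

lemma fullF_Un: "odd (length W) \<Longrightarrow> \<Union> (fullF W mu) = set W \<union> {mu}"
  unfolding fullF_def by (subst pairs2_Un) auto

lemma fullF_disj: "distinct W \<Longrightarrow> mu \<notin> set W \<Longrightarrow> fam_disj (fullF W mu)"
  unfolding fullF_def by (rule fam_pairs2) simp

lemma stdF_E: "stdF W j \<subseteq> path_edges (mu # W @ [mu])"
  unfolding stdF_def using pairs2_pe[of "take (2*j) W"] pairs2_pe[of "drop (Suc (2*j)) W"]
    pe_take[of "2*j" W] pe_drop[of "Suc (2*j)" W] pe_sub_ext[of W mu] by blast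

lemma stdF_Un:
  assumes "distinct W" "odd (length W)" "2*j < length W"
  shows "\<Union> (stdF W j) = set W - {W!(2*j)}"
proof -
  have e1: "even (length (take (2*j) W))" using assms by simp
  have e2: "even (length (drop (Suc (2*j)) W))" using assms by simp
  show ?thesis unfolding stdF_def using pairs2_Un[OF e1] pairs2_Un[OF e2]
      take_drop_split[OF assms(1,3)] by auto
qed

lemma stdF_disj:
  assumes "distinct W"
  shows "fam_disj (stdF W j)"
proof -
  have a: "fam_disj (pairs2 (take (2*j) W))" "fam_disj (pairs2 (drop (Suc (2*j)) W))"
    using assms by (auto intro: fam_pairs2)
  have "set (take (2*j) W) \<inter> set (drop (Suc (2*j)) W) = {}"
    using set_take_disj_set_drop_if_distinct[OF assms, of "2*j" "Suc (2*j)"] by simp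
  then show ?thesis unfolding stdF_def using fam3[OF a fam_pairs2[of "[]"], of "set (take (2*j) W)"
      "set (drop (Suc (2*j)) W)" "{}"] pairs2_sub[of "take (2*j) W"] pairs2_sub[of "drop (Suc (2*j)) W"]
    by simp
qed

lemma even_idx:
  assumes "\<forall>j<length W. (W ! j \<in> X \<longleftrightarrow> even j)" "v \<in> set W" "v \<in> X"
  shows "\<exists>j. 2*j < length W \<and> W!(2*j) = v"
proof -
  obtain i where i: "i < length W" "W!i = v" using assms(2) by (auto simp: in_set_conv_nth)
  then have "even i" using assms(1,3) by blast
  then obtain j where "i = 2*j" by (auto elim: evenE)
  then show ?thesis using i by blast
qed

lemma edge_nbhd:
  assumes "q \<in> E" "x \<in> q" "\<forall>q\<in>E. \<exists>a b. q = {a,b} \<and> a \<noteq> b \<and> a \<in> V \<and> b \<in> V"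
  shows "q \<subseteq> closed_nbhd V E x"
proof -
  obtain a b where ab: "q = {a,b}" "a \<noteq> b" "a \<in> V" "b \<in> V" using assms(1,3) by blast
  show ?thesis
  proof
    fix z assume z: "z \<in> q"
    show "z \<in> closed_nbhd V E x"
    proof (cases "z = x")
      case True then show ?thesis unfolding closed_nbhd_def by simp
    next
      case False
      then have "q = {z,x}" using ab z assms(2) by auto
      then have "{z,x} \<in> E" "z \<in> V" using assms(1) ab z by auto
      then show ?thesis unfolding closed_nbhd_def by simp
    qed
  qed
qed

lemma pair_main:
  assumes "gstruct XF ET m W V E" "\<forall>q\<in>E. card (q \<inter> X) = 1" "XF \<subseteq> X" "v \<in> V" "v \<in> X"
  shows "\<exists>P. P \<subseteq> E \<and> fam_disj P \<and> v \<notin> \<Union>P \<and> (\<forall>x\<in>V \<inter> X - {v}. x \<in> \<Union>P)"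
  using assms
proof (induction "card XF" arbitrary: XF ET V E v rule: less_induct)
  case less
  note gs = less.prems(1)
  have tree: "is_tree XF ET" by (rule g_tree[OF gs])
  have finXF: "finite XF" "XF \<noteq> {}" using tree unfolding is_tree_def wf_graph_def by auto
  show ?case
  proof (cases "card XF \<le> 1")
    case True
    have "card XF > 0" using finXF by (simp add: card_gt_0_iff)
    then have c1: "card XF = 1" using True by linarith
    then obtain x where x: "XF = {x}" by (rule card_1_singletonE)
    have ET: "ET = {}" by (rule tree_single[OF tree c1])
    have V: "V = {x}" using g_V[OF gs] ET x by simp
    show ?thesis using V less.prems(4) unfolding fam_disj_def by (intro exI[of _ "{}"]) auto
  next
    case False
    obtain l p where lf: "{l,p} \<in> ET" "l \<noteq> p" "\<forall>e'\<in>ET. l \<in> e' \<longrightarrow> e' = {l,p}"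
      using tree_leaf[OF tree False] by blast
    let ?mu = "m {l,p}" and ?W1 = "W l {l,p}" and ?W2 = "W p {l,p}"
      and ?V' = "Vr XF ET m W l p" and ?E' = "Er ET m W l p"
    have lin: "l \<in> {l,p}" and pin: "p \<in> {l,p}" by auto
    have lXF: "l \<in> XF" by (rule g_xXF[OF gs lf(1) lin])
    have gs': "gstruct (XF - {l}) (ET - {{l,p}}) m W ?V' ?E'" by (rule r_gs[OF gs lf])
    have IH: "\<exists>P. P \<subseteq> ?E' \<and> fam_disj P \<and> v' \<notin> \<Union>P \<and> (\<forall>x\<in>?V' \<inter> X - {v'}. x \<in> \<Union>P)"
      if "v' \<in> ?V'" "v' \<in> X" for v'
    proof (rule less.hyps)
      show "card (XF - {l}) < card XF" using finXF lXF by (meson card_Diff1_less)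
      show "gstruct (XF - {l}) (ET - {{l,p}}) m W ?V' ?E'" by (rule gs')
      show "\<forall>q\<in>?E'. card (q \<inter> X) = 1" using less.prems(2) r_Esub[OF gs lf] by blast
      show "XF - {l} \<subseteq> X" using less.prems(3) by blast
    qed (use that in auto)
    have E'V': "\<Union>P \<subseteq> ?V'" if PE: "P \<subseteq> ?E'" for P
    proof
      fix z assume "z \<in> \<Union>P"
      then obtain q where q: "q \<in> ?E'" "z \<in> q" using PE by blast
      then show "z \<in> ?V'" using g_edge[OF gs' q(1)] by auto
    qed
    have d1: "distinct ?W1" "?mu \<notin> set ?W1" using g_gad(1)[OF gs lf(1) lin] g_me[OF gs lf(1) lin] by auto
    have d2: "distinct ?W2" "?mu \<notin> set ?W2" using g_gad(1)[OF gs lf(1) pin] g_me[OF gs lf(1) pin] by auto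
    have o1: "odd (length ?W1)" and o2: "odd (length ?W2)"
      using g_gad(2)[OF gs lf(1) lin] g_gad(2)[OF gs lf(1) pin] by auto
    obtain i2 where i2: "2*i2 < length ?W2" "?W2 ! (2*i2) = p" using g_gad(3)[OF gs lf(1) pin] by blast
    have par1: "\<forall>j<length ?W1. (?W1 ! j \<in> X \<longleftrightarrow> even j)"
      using g_parity(1)[OF gs less.prems(2,3) lf(1) lin] .
    have par2: "\<forall>j<length ?W2. (?W2 ! j \<in> X \<longleftrightarrow> even j)"
      using g_parity(1)[OF gs less.prems(2,3) lf(1) pin] .
    have muX: "?mu \<notin> X" using g_parity(2)[OF gs less.prems(2,3) lf(1) lin] .
    have W12: "set ?W1 \<inter> set ?W2 = {}" by (rule r_W12[OF gs lf])
    have rW1: "set ?W1 \<inter> ?V' = {}" by (rule r_W1[OF gs lf])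
    have rW2: "set ?W2 \<inter> ?V' \<subseteq> {p}" by (rule r_W2[OF gs lf])
    have rme: "?mu \<notin> ?V'" by (rule r_me[OF gs lf])
    have pV': "p \<in> ?V'" by (rule r_pV[OF gs lf])
    have pX: "p \<in> X" using less.prems(3) g_xXF[OF gs lf(1) pin] by blast
    have pW2: "p \<in> set ?W2" using g_xW[OF gs lf(1) pin] .
    have cov: "V \<subseteq> ?V' \<union> {?mu} \<union> set ?W1 \<union> set ?W2" by (rule r_cover[OF gs lf])
    have E1: "path_edges (?mu # ?W1 @ [?mu]) \<subseteq> E" by (rule g_pe_E[OF gs lf(1) lin])
    have E2: "path_edges (?mu # ?W2 @ [?mu]) \<subseteq> E" by (rule g_pe_E[OF gs lf(1) pin])
    have E'E: "?E' \<subseteq> E" by (rule r_Esub[OF gs lf])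
    show ?thesis
    proof (cases "v \<in> ?V'")
      case True
      obtain P' where P': "P' \<subseteq> ?E'" "fam_disj P'" "v \<notin> \<Union>P'" "\<forall>x\<in>?V' \<inter> X - {v}. x \<in> \<Union>P'"
        using IH[OF True less.prems(5)] by blast
      let ?P = "P' \<union> fullF ?W1 ?mu \<union> stdF ?W2 i2"
      have U1: "\<Union>(fullF ?W1 ?mu) = set ?W1 \<union> {?mu}" by (rule fullF_Un[OF o1])
      have U2: "\<Union>(stdF ?W2 i2) = set ?W2 - {p}" using stdF_Un[OF d2(1) o2 i2(1)] i2(2) by simp
      show ?thesis
      proof (intro exI[of _ ?P] conjI)
        have s1: "P' \<subseteq> E" using P'(1) E'E by (rule subset_trans)
        have s2: "fullF ?W1 ?mu \<subseteq> E" using fullF_E E1 by (rule subset_trans)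
        have s3: "stdF ?W2 i2 \<subseteq> E" using stdF_E E2 by (rule subset_trans)
        show "?P \<subseteq> E" using s1 s2 s3 by (intro Un_least)
        have a1: "\<Union>(fullF ?W1 ?mu) \<subseteq> set ?W1 \<union> {?mu}" by (simp only: U1)
        have a2: "\<Union>(stdF ?W2 i2) \<subseteq> set ?W2 - {p}" by (simp only: U2)
        have b1: "?V' \<inter> (set ?W1 \<union> {?mu}) = {}" using rW1 rme by blast
        have b2: "?V' \<inter> (set ?W2 - {p}) = {}" using rW2 by blast
        have b3: "(set ?W1 \<union> {?mu}) \<inter> (set ?W2 - {p}) = {}" using W12 d2(2) by blast
        show "fam_disj ?P"
          by (rule fam3[OF P'(2) fullF_disj[OF d1] stdF_disj[OF d2(1)] E'V'[OF P'(1)] a1 a2 b1 b2 b3])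
        have "v \<notin> set ?W1 \<union> {?mu}" "v \<notin> set ?W2 - {p}" using True b1 b2 by blast+
        then show "v \<notin> \<Union>?P" using P'(3) a1 a2 by blast
        show "\<forall>x\<in>V \<inter> X - {v}. x \<in> \<Union>?P"
        proof
          fix x assume x: "x \<in> V \<inter> X - {v}"
          then consider "x \<in> ?V'" | "x = ?mu" | "x \<in> set ?W1" | "x \<in> set ?W2" using cov by blast
          then show "x \<in> \<Union>?P"
          proof cases
            case 1 then show ?thesis using P'(4) x by blast
          next
            case 2 then show ?thesis using x muX by blast
          next
            case 3 then show ?thesis using U1 by blast
          next
            case 4 then show ?thesis using U2 P'(4) x pV' by (cases "x = p") auto
          qed
        qed
      qed
    next
      case vV': False
      obtain P' where P': "P' \<subseteq> ?E'" "fam_disj P'" "p \<notin> \<Union>P'" "\<forall>x\<in>?V' \<inter> X - {p}. x \<in> \<Union>P'"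
        using IH[OF pV' pX] by blast
      have P'V: "\<Union>P' \<subseteq> ?V' - {p}" using E'V'[OF P'(1)] P'(3) by blast
      show ?thesis
      proof (cases "v \<in> set ?W1")
        case True
        obtain j where j: "2*j < length ?W1" "?W1 ! (2*j) = v" using even_idx[OF par1 True less.prems(5)] by blast
        let ?P = "P' \<union> stdF ?W1 j \<union> fullF ?W2 ?mu"
        have U1: "\<Union>(stdF ?W1 j) = set ?W1 - {v}" using stdF_Un[OF d1(1) o1 j(1)] j(2) by simp
        have U2: "\<Union>(fullF ?W2 ?mu) = set ?W2 \<union> {?mu}" by (rule fullF_Un[OF o2])
        show ?thesis
        proof (intro exI[of _ ?P] conjI)
          have s1: "P' \<subseteq> E" using P'(1) E'E by (rule subset_trans)
          have s2: "stdF ?W1 j \<subseteq> E" using stdF_E E1 by (rule subset_trans)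
          have s3: "fullF ?W2 ?mu \<subseteq> E" using fullF_E E2 by (rule subset_trans)
          show "?P \<subseteq> E" using s1 s2 s3 by (intro Un_least)
          have a1: "\<Union>(stdF ?W1 j) \<subseteq> set ?W1 - {v}" by (simp only: U1)
          have a2: "\<Union>(fullF ?W2 ?mu) \<subseteq> set ?W2 \<union> {?mu}" by (simp only: U2)
          have b1: "(?V' - {p}) \<inter> (set ?W1 - {v}) = {}" using rW1 by blast
          have b2: "(?V' - {p}) \<inter> (set ?W2 \<union> {?mu}) = {}" using rW2 rme by blast
          have b3: "(set ?W1 - {v}) \<inter> (set ?W2 \<union> {?mu}) = {}" using W12 d1(2) by blast
          show "fam_disj ?P"
            by (rule fam3[OF P'(2) stdF_disj[OF d1(1)] fullF_disj[OF d2] P'V a1 a2 b1 b2 b3])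
          have "v \<notin> ?V' - {p}" "v \<notin> set ?W1 - {v}" "v \<notin> set ?W2 \<union> {?mu}"
            using vV' True W12 d1(2) by blast+
          then show "v \<notin> \<Union>?P" using P'V a1 a2 by blast
          show "\<forall>x\<in>V \<inter> X - {v}. x \<in> \<Union>?P"
          proof
            fix x assume x: "x \<in> V \<inter> X - {v}"
            then consider "x \<in> ?V'" | "x = ?mu" | "x \<in> set ?W1" | "x \<in> set ?W2" using cov by blast
            then show "x \<in> \<Union>?P"
            proof cases
              case 1 then show ?thesis using P'(4) x U2 pW2 by (cases "x = p") auto
            next
              case 2 then show ?thesis using x muX by blast
            next
              case 3 then show ?thesis using U1 x by blast
            next
              case 4 then show ?thesis using U2 by blast
            qed
          qed
        qed
      next
        case vW1: False
        have vW2: "v \<in> set ?W2" "v \<noteq> p" using cov less.prems(4,5) muX vV' vW1 pV' by auto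
        obtain j where j: "2*j < length ?W2" "?W2 ! (2*j) = v" using even_idx[OF par2 vW2(1) less.prems(5)] by blast
        let ?P = "P' \<union> stdF ?W2 j \<union> fullF ?W1 ?mu"
        have U2: "\<Union>(stdF ?W2 j) = set ?W2 - {v}" using stdF_Un[OF d2(1) o2 j(1)] j(2) by simp
        have U1: "\<Union>(fullF ?W1 ?mu) = set ?W1 \<union> {?mu}" by (rule fullF_Un[OF o1])
        show ?thesis
        proof (intro exI[of _ ?P] conjI)
          have s1: "P' \<subseteq> E" using P'(1) E'E by (rule subset_trans)
          have s2: "stdF ?W2 j \<subseteq> E" using stdF_E E2 by (rule subset_trans)
          have s3: "fullF ?W1 ?mu \<subseteq> E" using fullF_E E1 by (rule subset_trans)
          show "?P \<subseteq> E" using s1 s2 s3 by (intro Un_least)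
          have a1: "\<Union>(stdF ?W2 j) \<subseteq> set ?W2 - {v}" by (simp only: U2)
          have a2: "\<Union>(fullF ?W1 ?mu) \<subseteq> set ?W1 \<union> {?mu}" by (simp only: U1)
          have b1: "(?V' - {p}) \<inter> (set ?W2 - {v}) = {}" using rW2 by blast
          have b2: "(?V' - {p}) \<inter> (set ?W1 \<union> {?mu}) = {}" using rW1 rme by blast
          have b3: "(set ?W2 - {v}) \<inter> (set ?W1 \<union> {?mu}) = {}" using W12 d2(2) by blast
          show "fam_disj ?P"
            by (rule fam3[OF P'(2) stdF_disj[OF d2(1)] fullF_disj[OF d1] P'V a1 a2 b1 b2 b3])
          have "v \<notin> ?V' - {p}" "v \<notin> set ?W2 - {v}" "v \<notin> set ?W1 \<union> {?mu}"
            using vV' vW1 vW2 d2(2) by blast+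
          then show "v \<notin> \<Union>?P" using P'V a1 a2 by blast
          show "\<forall>x\<in>V \<inter> X - {v}. x \<in> \<Union>?P"
          proof
            fix x assume x: "x \<in> V \<inter> X - {v}"
            then consider "x \<in> ?V'" | "x = ?mu" | "x \<in> set ?W1" | "x \<in> set ?W2" using cov by blast
            then show "x \<in> \<Union>?P"
            proof cases
              case 1 then show ?thesis using P'(4) x U2 pW2 vW2(2) by (cases "x = p") auto
            next
              case 2 then show ?thesis using x muX by blast
            next
              case 3 then show ?thesis using U1 by blast
            next
              case 4 then show ?thesis using U2 x by blast
            qed
          qed
        qed
      qed
    qed
  qed
qed

lemma odd_path_rev: "odd_path p x y \<Longrightarrow> odd_path (rev p) y x"
  unfolding odd_path_def by (auto simp: hd_rev last_rev)

lemma op_facts: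
  assumes "odd_path p a b"
  shows "p \<noteq> []" "hd p = a" "last p = b" "distinct p" "2 \<le> length p" "even (length p)"
    "butlast p \<noteq> []"
proof -
  show ne: "p \<noteq> []" using assms unfolding odd_path_def by auto
  show "hd p = a" "last p = b" "distinct p" "2 \<le> length p" "even (length p)"
    using assms unfolding odd_path_def by auto
  show "butlast p \<noteq> []" using assms unfolding odd_path_def by (cases p) auto
qed

lemma op_eq: "odd_path p a b \<Longrightarrow> butlast p @ [b] = p"
  using op_facts(1,3)[of p a b] by (metis append_butlast_last_id)

lemma glue_list:
  assumes "odd_path p a b" "odd_path q a b"
  shows "b # (rev (butlast p) @ tl (butlast q)) @ [b] = rev p @ tl q"
proof -
  have p: "butlast p @ [b] = p" and q: "butlast q @ [b] = q" "butlast q \<noteq> []"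
    using op_eq[OF assms(1)] op_eq[OF assms(2)] op_facts(7)[OF assms(2)] by auto
  have "rev (butlast p @ [b]) = b # rev (butlast p)" by simp
  then have rp: "rev p = b # rev (butlast p)" by (simp only: p)
  have "tl (butlast q @ [b]) = tl (butlast q) @ [b]" using q(2) by simp
  then have tq: "tl q = tl (butlast q) @ [b]" by (simp only: q(1))
  show ?thesis by (simp only: rp tq append_Cons append_assoc)
qed

lemma glue_pe:
  assumes "odd_path p a b" "odd_path q a b"
  shows "path_edges (rev p @ tl q) = path_edges p \<union> path_edges q"
proof -
  have hq: "hd q = a" and lq: "2 \<le> length q" using op_facts[OF assms(2)] by auto
  obtain c r where q: "q = a # c # r" using hq lq by (cases q; cases "tl q") auto
  have hp: "hd p = a" "p \<noteq> []" using op_facts[OF assms(1)] by auto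
  have lr: "last (rev p) = a" using hp by (simp add: last_rev)
  have "path_edges (rev p @ tl q) = path_edges (rev p) \<union> path_edges (c # r) \<union> {{a, c}}"
    using pe_append[of "rev p" "c # r"] lr hp q by simp
  also have "\<dots> = path_edges p \<union> path_edges q" using q by (simp add: pe_rev)
  finally show ?thesis .
qed

lemma glue_set:
  assumes "odd_path p a b" "odd_path q a b"
  shows "set (rev (butlast p) @ tl (butlast q)) \<union> {b} = set p \<union> set q"
proof -
  have "set (b # (rev (butlast p) @ tl (butlast q)) @ [b]) = set (rev p @ tl q)"
    by (simp only: glue_list[OF assms])
  then have e: "insert b (set (rev (butlast p) @ tl (butlast q))) = set p \<union> set (tl q)" by simp
  have hq: "hd q = a" "q \<noteq> []" using op_facts[OF assms(2)] by auto
  obtain r where qr: "q = a # r" using hq by (cases q) auto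
  have sq: "set q = insert a (set (tl q))" using qr by simp
  have "hd p \<in> set p" using op_facts(1)[OF assms(1)] by (rule hd_in_set)
  then have ap: "a \<in> set p" using op_facts(2)[OF assms(1)] by simp
  have "set (rev (butlast p) @ tl (butlast q)) \<union> {b} = insert b (set (rev (butlast p) @ tl (butlast q)))"
    by simp
  also have "\<dots> = set p \<union> set (tl q)" by (rule e)
  also have "\<dots> = set p \<union> set q" using sq ap by auto
  finally show ?thesis .
qed

lemma gs_intro:
  assumes "is_tree XF ET" "inj_on m ET" "m ` ET \<inter> XF = {}"
   "\<forall>e\<in>ET. \<forall>x\<in>e. distinct (W x e) \<and> odd (length (W x e)) \<and>
      (\<exists>i. 2*i < length (W x e) \<and> W x e ! (2*i) = x) \<and> set (W x e) \<inter> (XF \<union> m ` ET) = {x}"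
   "\<forall>e\<in>ET. \<forall>x\<in>e. \<forall>e'\<in>ET. \<forall>x'\<in>e'. (x,e) \<noteq> (x',e') \<longrightarrow> (set (W x e) - {x}) \<inter> set (W x' e') = {}"
   "V = XF \<union> m ` ET \<union> (\<Union>e\<in>ET. \<Union>x\<in>e. set (W x e))"
   "E = (\<Union>e\<in>ET. \<Union>x\<in>e. path_edges (m e # W x e @ [m e]))"
  shows "gstruct XF ET m W V E"
  by (unfold gstruct_def, insert assms, intro conjI, assumption+)

lemma dor_gs:
  assumes tree: "is_tree XF ET" and bij: "bij_betw m ET (VF - XF)" and sub: "XF \<subseteq> VF"
    and EF: "EF = {{x, m e} | x e. e \<in> ET \<and> x \<in> e}"
    and d: "dor VF EF V E R"
  shows "\<exists>W. gstruct XF ET m W V E \<and> (\<forall>e\<in>ET. \<forall>x\<in>e. {x, m e} \<notin> R \<longrightarrow> W x e = [x])"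
  using d
proof (induction rule: dor.induct)
  case base
  have inj: "inj_on m ET" using bij by (rule bij_betw_imp_inj_on)
  have img: "m ` ET = VF - XF" using bij by (rule bij_betw_imp_surj_on)
  have xXF: "x \<in> XF" if "e \<in> ET" "x \<in> e" for e x
    using wf_edge[of XF ET e] tree that unfolding is_tree_def by blast
  let ?W = "\<lambda>x e. [x]"
  have "gstruct XF ET m ?W VF EF"
  proof (rule gs_intro)
    show "is_tree XF ET" by (rule tree)
    show "inj_on m ET" by (rule inj)
    show "m ` ET \<inter> XF = {}" using img by blast
    show "\<forall>e\<in>ET. \<forall>x\<in>e. distinct [x] \<and> odd (length [x]) \<and>
      (\<exists>i. 2*i < length [x] \<and> [x] ! (2*i) = x) \<and> set [x] \<inter> (XF \<union> m ` ET) = {x}"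
      using xXF by auto
    show "\<forall>e\<in>ET. \<forall>x\<in>e. \<forall>e'\<in>ET. \<forall>x'\<in>e'. (x,e) \<noteq> (x',e') \<longrightarrow> (set [x] - {x}) \<inter> set [x'] = {}"
      by auto
    show "VF = XF \<union> m ` ET \<union> (\<Union>e\<in>ET. \<Union>x\<in>e. set [x])"
      using img sub xXF by auto
    show "EF = (\<Union>e\<in>ET. \<Union>x\<in>e. path_edges (m e # [x] @ [m e]))"
      unfolding EF by (auto simp: insert_commute)
  qed
  then show ?case by blast
next
  case (step V E R x y p q)
  obtain W where W: "gstruct XF ET m W V E" "\<forall>e\<in>ET. \<forall>x\<in>e. {x, m e} \<notin> R \<longrightarrow> W x e = [x]"
    using step.IH by blast
  note gs = W(1)
  obtain x0 e0 where xe0: "e0 \<in> ET" "x0 \<in> e0" "{x,y} = {x0, m e0}" using step.hyps(2) unfolding EF by blast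
  let ?mu = "m e0"
  have x0XF: "x0 \<in> XF" by (rule g_xXF[OF gs xe0(1,2)])
  have muXF: "?mu \<notin> XF" by (rule g_mXF[OF gs xe0(1)])
  have or: "(x = x0 \<and> y = ?mu) \<or> (x = ?mu \<and> y = x0)" using xe0(3) by (auto simp: doubleton_eq_iff)
  define p' where "p' = (if x = x0 then p else rev p)"
  define q' where "q' = (if x = x0 then q else rev q)"
  have op: "odd_path p' x0 ?mu" "odd_path q' x0 ?mu"
    using or step.hyps(6,7) odd_path_rev unfolding p'_def q'_def by auto
  have setpq: "set p' \<union> set q' = set p \<union> set q" "set p' \<inter> set q' = set p \<inter> set q"
    unfolding p'_def q'_def by auto
  have pepq: "path_edges p' \<union> path_edges q' = path_edges p \<union> path_edges q"
    unfolding p'_def q'_def by (auto simp: pe_rev)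
  have xy: "{x,y} = {x0, ?mu}" by (rule xe0(3))
  have int: "set p' \<inter> set q' = {x0, ?mu}" using setpq(2) step.hyps(8) xy by simp
  have inV: "(set p' \<union> set q') \<inter> V = {x0, ?mu}" using setpq(1) step.hyps(9) xy by simp
  have old: "W x0 e0 = [x0]" using W(2) xe0 step.hyps(3) xy by auto
  define NL where "NL = rev (butlast p') @ tl (butlast q')"
  define W' where "W' = (\<lambda>a b. if a = x0 \<and> b = e0 then NL else W a b)"
  have W'_eq: "W' x0 e0 = NL" unfolding W'_def by simp
  have W'_ne: "W' a e = W a e" if "\<not> (a = x0 \<and> e = e0)" for a e
    using that unfolding W'_def by (simp only: if_False)
  have fp: "p' \<noteq> []" "hd p' = x0" "last p' = ?mu" "distinct p'" "2 \<le> length p'" "even (length p')" "butlast p' \<noteq> []"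
    using op_facts[OF op(1)] by auto
  have fq: "q' \<noteq> []" "hd q' = x0" "last q' = ?mu" "distinct q'" "2 \<le> length q'" "even (length q')" "butlast q' \<noteq> []"
    using op_facts[OF op(2)] by auto
  have mub: "?mu \<notin> set (butlast p')" "?mu \<notin> set (butlast q')"
    using op_eq[OF op(1)] op_eq[OF op(2)] fp(4) fq(4) by (metis distinct_append not_distinct_conv_prefix)+
  have x0t: "x0 \<notin> set (tl q')"
  proof -
    obtain r where "q' = x0 # r" using fq(1,2) by (cases q') auto
    then show ?thesis using fq(4) by simp
  qed
  have tlsub: "set (tl xs) \<subseteq> set xs" for xs :: "'a list" by (cases xs) auto
  have blsub: "set (butlast xs) \<subseteq> set xs" for xs :: "'a list" by (auto dest: in_set_butlastD)
  have sbp: "set (butlast p') \<subseteq> set p'" "set (tl (butlast q')) \<subseteq> set q'"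
    using blsub tlsub by (blast, blast)
  have tbq: "set (tl (butlast q')) \<subseteq> set (tl q')"
    using blsub[of "tl q'"] by (simp add: butlast_tl)
  have N1: "distinct NL"
  proof -
    have "set (butlast p') \<inter> set (tl (butlast q')) = {}"
    proof (rule equals0I)
      fix z assume z: "z \<in> set (butlast p') \<inter> set (tl (butlast q'))"
      then have "z \<in> set p' \<inter> set q'" using sbp by blast
      then have "z = x0 \<or> z = ?mu" using int by blast
      moreover have "z \<noteq> ?mu" using z mub(1) by blast
      moreover have "z \<noteq> x0" using z tbq x0t by blast
      ultimately show False by blast
    qed
    moreover have "distinct (butlast p')" "distinct (tl (butlast q'))"
      using fp(4) fq(4) by (auto simp: distinct_butlast distinct_tl)
    ultimately show ?thesis unfolding NL_def by simp
  qed
  have lenNL: "length NL = (length p' - 1) + (length q' - 2)" unfolding NL_def by simp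
  have N2: "odd (length NL)" using lenNL fp(5,6) fq(5,6) by auto
  have N3: "NL ! (2 * ((length p' - 2) div 2)) = x0" "2 * ((length p' - 2) div 2) < length NL"
  proof -
    have e2: "2 * ((length p' - 2) div 2) = length p' - 2" using fp(5,6) by auto
    have "length p' - 2 < length (rev (butlast p'))" using fp(5) by simp
    then have "NL ! (length p' - 2) = rev (butlast p') ! (length p' - 2)" unfolding NL_def by (simp add: nth_append)
    also have "\<dots> = butlast p' ! 0" using fp(5) by (simp add: rev_nth)
    also have "\<dots> = p' ! 0" using fp(5) by (simp add: nth_butlast)
    also have "\<dots> = x0" using fp(1,2) by (simp add: hd_conv_nth)
    finally show "NL ! (2 * ((length p' - 2) div 2)) = x0" using e2 by simp
    show "2 * ((length p' - 2) div 2) < length NL" using e2 lenNL fp(5) by simp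
  qed
  have N4: "set NL \<union> {?mu} = set p' \<union> set q'" unfolding NL_def by (rule glue_set[OF op])
  have N5: "?mu \<notin> set NL" unfolding NL_def using mub tlsub[of "butlast q'"] by auto
  have x0NL: "x0 \<in> set NL" using N3 nth_mem by metis
  have N7: "set NL \<inter> V \<subseteq> {x0}" using N4 N5 inV by blast
  have N8: "path_edges (?mu # NL @ [?mu]) = path_edges p \<union> path_edges q"
  proof -
    have "?mu # NL @ [?mu] = rev p' @ tl q'" unfolding NL_def using glue_list[OF op] by simp
    then show ?thesis using glue_pe[OF op] pepq by simp
  qed
  have WV: "set (W a b) \<subseteq> V" if "b \<in> ET" "a \<in> b" for a b using g_V[OF gs] that by blast
  have XmV: "XF \<union> m ` ET \<subseteq> V" using g_V[OF gs] by blast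
  have O: "{x0, ?mu} \<notin> path_edges (m e1 # W x1 e1 @ [m e1])"
    if "e1 \<in> ET" "x1 \<in> e1" "(x1,e1) \<noteq> (x0,e0)" for x1 e1
  proof
    assume a: "{x0, ?mu} \<in> path_edges (m e1 # W x1 e1 @ [m e1])"
    then have s: "{x0, ?mu} \<subseteq> insert (m e1) (set (W x1 e1))" using pe_sub_set by fastforce
    have s1: "set (W x1 e1) \<inter> (XF \<union> m ` ET) = {x1}" by (rule g_gad(4)[OF gs that(1,2)])
    have x1XF: "x1 \<in> XF" by (rule g_xXF[OF gs that(1,2)])
    have "?mu \<notin> set (W x1 e1)"
    proof
      assume "?mu \<in> set (W x1 e1)"
      then have "?mu \<in> set (W x1 e1) \<inter> (XF \<union> m ` ET)" using xe0(1) by blast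
      then have "?mu = x1" using s1 by blast
      then show False using x1XF muXF by simp
    qed
    then have "?mu = m e1" using s by blast
    then have "e1 = e0" using g_inj[OF gs] that(1) xe0(1) by (auto simp: inj_on_def)
    then have "x1 \<noteq> x0" using that(3) by simp
    have "x0 \<noteq> m e1" using x0XF g_mXF[OF gs that(1)] by metis
    then have "x0 \<in> set (W x1 e1)" using s by blast
    then have "x1 = x0" using g_other[OF gs xe0(1,2) that(1,2)] by simp
    then show False using \<open>x1 \<noteq> x0\<close> by simp
  qed
  have G: "gstruct XF ET m W' (V \<union> set p \<union> set q) (E - {{x, y}} \<union> path_edges p \<union> path_edges q)"
  proof (rule gs_intro)
    show "is_tree XF ET" by (rule g_tree[OF gs])
    show "inj_on m ET" by (rule g_inj[OF gs])
    show "m ` ET \<inter> XF = {}" using g_mXF[OF gs] by blast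
    show "\<forall>e\<in>ET. \<forall>a\<in>e. distinct (W' a e) \<and> odd (length (W' a e)) \<and>
      (\<exists>i. 2*i < length (W' a e) \<and> W' a e ! (2*i) = a) \<and> set (W' a e) \<inter> (XF \<union> m ` ET) = {a}"
    proof (intro ballI)
      fix e a assume ea: "e \<in> ET" "a \<in> e"
      show "distinct (W' a e) \<and> odd (length (W' a e)) \<and>
        (\<exists>i. 2*i < length (W' a e) \<and> W' a e ! (2*i) = a) \<and> set (W' a e) \<inter> (XF \<union> m ` ET) = {a}"
      proof (cases "a = x0 \<and> e = e0")
        case True
        have "set NL \<inter> (XF \<union> m ` ET) = {x0}" using N7 XmV x0NL x0XF by blast
        then show ?thesis using True N1 N2 N3 W'_eq by auto
      next
        case False
        then show ?thesis using W'_ne[OF False] g_gad[OF gs ea] by auto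
      qed
    qed
    show "\<forall>e\<in>ET. \<forall>a\<in>e. \<forall>e'\<in>ET. \<forall>a'\<in>e'. (a,e) \<noteq> (a',e') \<longrightarrow> (set (W' a e) - {a}) \<inter> set (W' a' e') = {}"
    proof (intro ballI impI)
      fix e a e' a' assume h: "e \<in> ET" "a \<in> e" "e' \<in> ET" "a' \<in> e'" "(a,e) \<noteq> (a',e')"
      show "(set (W' a e) - {a}) \<inter> set (W' a' e') = {}"
      proof (cases "a = x0 \<and> e = e0")
        case True
        then have "\<not> (a' = x0 \<and> e' = e0)" using h(5) by auto
        then have "W' a' e' = W a' e'" unfolding W'_def by (simp only: if_False)
        moreover have "W' a e = NL" using True unfolding W'_def by simp
        moreover have "(set NL - {a}) \<inter> set (W a' e') = {}" using True WV[OF h(3,4)] N7 by blast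
        ultimately show ?thesis by simp
      next
        case F1: False
        show ?thesis
        proof (cases "a' = x0 \<and> e' = e0")
          case True
          have "(set (W a e) - {a}) \<inter> set NL = {}"
          proof (rule equals0I)
            fix z assume z: "z \<in> (set (W a e) - {a}) \<inter> set NL"
            then have "z = x0" using WV[OF h(1,2)] N7 by blast
            then have "x0 \<in> set (W a e)" "x0 \<noteq> a" using z by auto
            then show False using g_other[OF gs xe0(1,2) h(1,2)] by simp
          qed
          then show ?thesis using True W'_ne[OF F1] W'_eq by simp
        next
          case False
          then show ?thesis using W'_ne[OF F1] W'_ne[OF False] g_disj[OF gs h] by simp
        qed
      qed
    qed
    have U: "XF \<union> m ` ET \<union> (\<Union>e\<in>ET. \<Union>a\<in>e. set (W' a e)) = XF \<union> m ` ET \<union> (\<Union>e\<in>ET. \<Union>a\<in>e. set (W a e)) \<union> set NL"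
    proof (rule equalityI)
      show "XF \<union> m ` ET \<union> (\<Union>e\<in>ET. \<Union>a\<in>e. set (W' a e)) \<subseteq> XF \<union> m ` ET \<union> (\<Union>e\<in>ET. \<Union>a\<in>e. set (W a e)) \<union> set NL"
        unfolding W'_def by (auto split: if_splits)
      show "XF \<union> m ` ET \<union> (\<Union>e\<in>ET. \<Union>a\<in>e. set (W a e)) \<union> set NL \<subseteq> XF \<union> m ` ET \<union> (\<Union>e\<in>ET. \<Union>a\<in>e. set (W' a e))"
      proof
        fix z assume z: "z \<in> XF \<union> m ` ET \<union> (\<Union>e\<in>ET. \<Union>a\<in>e. set (W a e)) \<union> set NL"
        show "z \<in> XF \<union> m ` ET \<union> (\<Union>e\<in>ET. \<Union>a\<in>e. set (W' a e))"
        proof (cases "z \<in> set NL")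
          case True
          then have "z \<in> set (W' x0 e0)" using W'_eq by simp
          then show ?thesis using xe0(1,2) by blast
        next
          case False
          then consider "z \<in> XF" | "z \<in> m ` ET" | e a where "e \<in> ET" "a \<in> e" "z \<in> set (W a e)"
            using z by blast
          then show ?thesis
          proof cases
            case 3
            show ?thesis
            proof (cases "a = x0 \<and> e = e0")
              case True then have "z = x0" using 3 old by simp
              then show ?thesis using x0XF by blast
            next
              case False then have "z \<in> set (W' a e)" using 3 W'_ne[OF False] by simp
              then show ?thesis using 3 by blast
            qed
          qed auto
        qed
      qed
    qed
    show "V \<union> set p \<union> set q = XF \<union> m ` ET \<union> (\<Union>e\<in>ET. \<Union>a\<in>e. set (W' a e))"
    proof -
      have "V \<union> set p \<union> set q = V \<union> (set NL \<union> {?mu})" using N4 setpq(1) by auto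
      also have "\<dots> = XF \<union> m ` ET \<union> (\<Union>e\<in>ET. \<Union>a\<in>e. set (W a e)) \<union> set NL"
        using g_V[OF gs] xe0(1) by auto
      finally show ?thesis using U by simp
    qed
    let ?G = "\<lambda>a e. path_edges (m e # W a e @ [m e])"
    let ?G' = "\<lambda>a e. path_edges (m e # W' a e @ [m e])"
    have G0: "?G' x0 e0 = path_edges p \<union> path_edges q" using W'_eq N8 by simp
    have Gold: "?G x0 e0 = {{x, y}}" using old xy by (simp add: insert_commute)
    show "E - {{x, y}} \<union> path_edges p \<union> path_edges q = (\<Union>e\<in>ET. \<Union>a\<in>e. ?G' a e)"
    proof (rule equalityI)
      show "E - {{x, y}} \<union> path_edges p \<union> path_edges q \<subseteq> (\<Union>e\<in>ET. \<Union>a\<in>e. ?G' a e)"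
      proof
        fix z assume z: "z \<in> E - {{x, y}} \<union> path_edges p \<union> path_edges q"
        show "z \<in> (\<Union>e\<in>ET. \<Union>a\<in>e. ?G' a e)"
        proof (cases "z \<in> path_edges p \<union> path_edges q")
          case True then show ?thesis using G0 xe0(1,2) by blast
        next
          case False
          then have zE: "z \<in> E" "z \<noteq> {x,y}" using z by auto
          then obtain e a where ea: "e \<in> ET" "a \<in> e" "z \<in> ?G a e" using g_E[OF gs] by blast
          have "\<not> (a = x0 \<and> e = e0)" using ea(3) Gold zE(2) by auto
          then have "z \<in> ?G' a e" using ea(3) W'_ne by simp
          then show ?thesis using ea(1,2) by blast
        qed
      qed
      show "(\<Union>e\<in>ET. \<Union>a\<in>e. ?G' a e) \<subseteq> E - {{x, y}} \<union> path_edges p \<union> path_edges q"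
      proof
        fix z assume "z \<in> (\<Union>e\<in>ET. \<Union>a\<in>e. ?G' a e)"
        then obtain e a where ea: "e \<in> ET" "a \<in> e" "z \<in> ?G' a e" by blast
        show "z \<in> E - {{x, y}} \<union> path_edges p \<union> path_edges q"
        proof (cases "a = x0 \<and> e = e0")
          case True then show ?thesis using ea(3) G0 by auto
        next
          case False
          then have zG: "z \<in> ?G a e" using ea(3) W'_ne[OF False] by simp
          then have "z \<in> E" using g_E[OF gs] ea(1,2) by blast
          moreover have "z \<noteq> {x,y}" using O[OF ea(1,2)] False zG xy by auto
          ultimately show ?thesis by blast
        qed
      qed
    qed
  qed
  have T: "\<forall>e\<in>ET. \<forall>a\<in>e. {a, m e} \<notin> insert {x, y} R \<longrightarrow> W' a e = [a]"
  proof (intro ballI impI)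
    fix e a assume ea: "e \<in> ET" "a \<in> e" "{a, m e} \<notin> insert {x, y} R"
    have "\<not> (a = x0 \<and> e = e0)" using ea(3) xy by auto
    then show "W' a e = [a]" using W(2) ea W'_ne by auto
  qed
  show ?case using G T by blast
qed

theorem theorem5p2:
  fixes VF V :: "'a set" and EF E :: "'a set set" and XF X :: "'a set"
  assumes "is_F_cactus VF EF XF V E"
    and "XF \<subseteq> X" and "X \<subseteq> V"
    and "\<forall>e\<in>E. card (e \<inter> X) = 1"
  shows "atomic_MBD_critical V E (V - X)"
proof -
  have inS: "in_S VF EF XF" and cac: "is_cactus V E" and "\<exists>R. dor VF EF V E R"
    using assms(1) unfolding is_F_cactus_def by auto
  then obtain R where dR: "dor VF EF V E R" by blast
  obtain ET where tree: "is_tree XF ET" and sd: "is_subdivision XF ET VF EF"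
    using inS unfolding in_S_def by blast
  have sub: "XF \<subseteq> VF" using sd unfolding is_subdivision_def by blast
  obtain m where bij: "bij_betw m ET (VF - XF)" and EF: "EF = {{x, m e} | x e. e \<in> ET \<and> x \<in> e}"
    using sd unfolding is_subdivision_def by blast
  obtain W where gs: "gstruct XF ET m W V E"
    using dor_gs[OF tree bij sub EF dR] by blast
  have edges: "\<forall>q\<in>E. \<exists>a b. q = {a,b} \<and> a \<noteq> b \<and> a \<in> V \<and> b \<in> V"
    using g_edge[OF gs] by blast
  have SW: "staller_wins_MBD V E (V - X)"
    unfolding staller_wins_MBD_def by (rule staller_main[OF gs assms(4,2)])
  have DW: "\<forall>v\<in>V - (V - X). dominator_wins_MBD V E ((V - X) \<union> {v})"
  proof
    fix v assume v: "v \<in> V - (V - X)"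
    then have vV: "v \<in> V" and vX: "v \<in> X" by auto
    obtain P where P: "P \<subseteq> E" "fam_disj P" "v \<notin> \<Union>P" "\<forall>x\<in>V \<inter> X - {v}. x \<in> \<Union>P"
      using pair_main[OF gs assms(4,2) vV vX] by blast
    show "dominator_wins_MBD V E ((V - X) \<union> {v})"
    proof (rule pairing_dom)
      show "\<forall>p\<in>P. card p = 2"
      proof
        fix p assume "p \<in> P"
        then obtain a b where "p = {a,b}" "a \<noteq> b" using edges P(1) by blast
        then show "card p = 2" by simp
      qed
      show "\<forall>p\<in>P. \<forall>q\<in>P. p \<noteq> q \<longrightarrow> p \<inter> q = {}" using P(2) unfolding fam_disj_def .
      show "\<forall>u\<in>V - ((V - X) \<union> {v}). \<exists>p\<in>P. p \<subseteq> closed_nbhd V E u"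
      proof
        fix u assume u: "u \<in> V - ((V - X) \<union> {v})"
        then have "u \<in> V \<inter> X - {v}" by blast
        then obtain p where p: "p \<in> P" "u \<in> p" using P(4) by blast
        have "p \<subseteq> closed_nbhd V E u" by (rule edge_nbhd[OF _ p(2) edges]) (use p(1) P(1) in blast)
        then show "\<exists>p\<in>P. p \<subseteq> closed_nbhd V E u" using p(1) by blast
      qed
    qed
  qed
  have indep: "\<forall>a\<in>V - X. \<forall>b\<in>V - X. {a, b} \<notin> E"
  proof (intro ballI)
    fix a b assume ab: "a \<in> V - X" "b \<in> V - X"
    show "{a,b} \<notin> E"
    proof
      assume "{a,b} \<in> E"
      then have "card ({a,b} \<inter> X) = 1" using assms(4) by blast
      moreover have "{a,b} \<inter> X = {}" using ab by blast
      ultimately show False by simp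
    qed
  qed
  have noiso: "\<forall>a\<in>V - X. \<exists>b\<in>V. {a, b} \<in> E"
  proof
    fix a assume a: "a \<in> V - X"
    obtain x0 where x0: "x0 \<in> XF" using tree unfolding is_tree_def by blast
    have x0V: "x0 \<in> V" using x0 assms(2,3) by blast
    have "(adj E)\<^sup>*\<^sup>* a x0" using cac a x0V unfolding is_cactus_def connected_graph_def by blast
    moreover have "a \<noteq> x0" using a x0 assms(2) by blast
    ultimately obtain w where "adj E a w" by (metis converse_rtranclpE)
    then have aw: "{a,w} \<in> E" unfolding adj_def .
    then obtain c d where "{a,w} = {c,d}" "c \<in> V" "d \<in> V" using edges by blast
    then have "w \<in> V" by (auto simp: doubleton_eq_iff)
    then show "\<exists>b\<in>V. {a, b} \<in> E" using aw by blast
  qed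
  have "V - X \<subseteq> V" by blast
  then have "MBD_critical V E (V - X)" unfolding MBD_critical_def using SW DW by (intro conjI)
  then show ?thesis unfolding atomic_MBD_critical_def using indep noiso by (intro conjI)
qed

end
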